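(* Let $V_0$ and $V_1$ be finite-dimensional complex vector spaces with fixed linear coordinates $x_0$ and $x_1$, and let $P(x_0,x_1,\lambda)$ be an element of the ring $\mathcal R(V_0\times V_1\times\mathbb C,V_0)$ with $P(x_0,0,0)\equiv0$. For a fixed integer $m\ge0$ consider the Laurent series expansion $P(x_0,x_1/\lambda^m,\lambda)=\sum_{\nu\in\mathbb Z}c_\nu(x_0,x_1)\lambda^\nu$. Then $c_0(x_0,0)\equiv0$ and, for every $\nu\in\mathbb Z$, $c_\nu$ belongs to the ring $\mathcal R(V_0\times V_1,V_0)$. In addition, if $P=O(K)$ for some integer $K>0$, then $c_\nu=O\big(\tfrac{K-\nu}{m+1}\big)$ for all $\nu\in\mathbb Z$ with $\nu\le K$.
   Context: For a finite-dimensional complex vector space $V$ and a linear subspace $V_0$ (here $V_0$ is identified with $V_0\times\{0\}$ in the products), $\mathcal R(V,V_0)$ is the ring of germs along $V_0$ of holomorphic functions $f$ defined on neighborhoods of $V_0$ in $V$ such that every partial derivative $\partial^\alpha f$ restricted to $V_0$ is a polynomial on $V_0$. The Laurent expansion is obtained by writing $P=\sum_{\beta,\mu}P_{\beta,\mu}(x_0)x_1^\beta\lambda^\mu$ and collecting, for each $\nu$, the terms with $\mu-m|\beta|=\nu$, so $c_\nu=\sum_{\mu-m|\beta|=\nu}P_{\beta,\mu}(x_0)x_1^\beta$. "$f=O(K)$" means that the power series of $f$ at the origin (in all its variables) vanishes to order at least $K$. *)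

theory Defs
  imports "HOL-Analysis.Analysis"
begin

text \<open>Coordinates: a space V0 x W is modelled as complex^('a + 'c); the copy of
V0 = V0 x {0} consists of the vectors vanishing on the Inr-coordinates.\<close>

definition vjoin :: "complex^('a::finite) \<Rightarrow> complex^('c::finite) \<Rightarrow> complex^('a + 'c)" where
  "vjoin x y = (\<chi> k. case k of Inl i \<Rightarrow> x $ i | Inr j \<Rightarrow> y $ j)"

definition vfst :: "complex^('a::finite + 'c::finite) \<Rightarrow> complex^'a" where
  "vfst z = (\<chi> i. z $ Inl i)"

definition cpartial :: "'n::finite \<Rightarrow> (complex^'n \<Rightarrow> complex) \<Rightarrow> complex^'n \<Rightarrow> complex" where
  "cpartial i f x = deriv (\<lambda>t. f (x + axis i t)) 0"

fun cpartials :: "'n::finite list \<Rightarrow> (complex^'n \<Rightarrow> complex) \<Rightarrow> complex^'n \<Rightarrow> complex" where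
  "cpartials [] f = f"
| "cpartials (i # is) f = cpartial i (cpartials is f)"

definition holo_on :: "(complex^'n::finite) set \<Rightarrow> (complex^'n \<Rightarrow> complex) \<Rightarrow> bool" where
  "holo_on U f \<longleftrightarrow> (\<forall>x\<in>U. \<exists>L. (f has_derivative L) (at x) \<and> (\<forall>c v. L (c *s v) = c * L v))"

definition poly_fun :: "(complex^'a::finite \<Rightarrow> complex) \<Rightarrow> bool" where
  "poly_fun f \<longleftrightarrow> (\<exists>A c. finite A \<and>
      (\<forall>x. f x = (\<Sum>\<alpha>\<in>A. c \<alpha> * (\<Prod>i\<in>UNIV. (x $ i) ^ (\<alpha> i)))))"

definition Rring :: "(complex^('a::finite + 'c::finite) \<Rightarrow> complex) \<Rightarrow> bool" where
  "Rring f \<longleftrightarrow> (\<exists>U. open U \<and> range (\<lambda>x0. vjoin x0 0) \<subseteq> U \<and> holo_on U f \<and>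
      (\<forall>is. poly_fun (\<lambda>x0. cpartials is f (vjoin x0 0))))"

text \<open>A list of coordinates realising the multi-index alpha (order irrelevant for
holomorphic functions), and the Taylor coefficient of f at z of index alpha.\<close>
definition mlist :: "('n::finite \<Rightarrow> nat) \<Rightarrow> 'n list" where
  "mlist \<alpha> = (SOME l. \<forall>i. count_list l i = \<alpha> i)"

definition tcoef :: "('n::finite \<Rightarrow> nat) \<Rightarrow> (complex^'n \<Rightarrow> complex) \<Rightarrow> complex^'n \<Rightarrow> complex" where
  "tcoef \<alpha> f z = cpartials (mlist \<alpha>) f z / (\<Prod>i\<in>UNIV. of_nat (fact (\<alpha> i)))"

definition vanishes_to :: "(complex^'n::finite \<Rightarrow> complex) \<Rightarrow> real \<Rightarrow> bool" where
  "vanishes_to f r \<longleftrightarrow> (\<forall>\<alpha>. real (\<Sum>i\<in>UNIV. \<alpha> i) < r \<longrightarrow> tcoef \<alpha> f 0 = 0)"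

text \<open>Points (x0, x1, lambda) of V0 x V1 x C: coordinates Inl i, Inr (Some j), Inr None.\<close>
definition vtriple :: "complex^('a::finite) \<Rightarrow> complex^('b::finite) \<Rightarrow> complex \<Rightarrow> complex^('a + 'b option)" where
  "vtriple x0 x1 l = vjoin x0 (\<chi> k. case k of Some j \<Rightarrow> x1 $ j | None \<Rightarrow> l)"

definition Pcoef :: "(complex^('a::finite + 'b::finite option) \<Rightarrow> complex) \<Rightarrow> ('b \<Rightarrow> nat) \<Rightarrow> nat \<Rightarrow> complex^'a \<Rightarrow> complex" where
  "Pcoef P \<beta> \<mu> x0 = tcoef (\<lambda>k. case k of Inl _ \<Rightarrow> 0 | Inr (Some j) \<Rightarrow> \<beta> j | Inr None \<Rightarrow> \<mu>) P (vjoin x0 0)"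

text \<open>Index set and terms of c_nu = sum over mu - m|beta| = nu of P_{beta,mu}(x0) x1^beta.\<close>
definition laurent_idx :: "nat \<Rightarrow> int \<Rightarrow> ('b::finite \<Rightarrow> nat) set" where
  "laurent_idx m \<nu> = {\<beta>. \<nu> + int m * int (\<Sum>j\<in>UNIV. \<beta> j) \<ge> 0}"

definition laurent_term :: "(complex^('a::finite + 'b::finite option) \<Rightarrow> complex) \<Rightarrow> nat \<Rightarrow> int \<Rightarrow> complex^('a + 'b) \<Rightarrow> ('b \<Rightarrow> nat) \<Rightarrow> complex" where
  "laurent_term P m \<nu> z \<beta> = Pcoef P \<beta> (nat (\<nu> + int m * int (\<Sum>j\<in>UNIV. \<beta> j))) (vfst z) *
      (\<Prod>j\<in>UNIV. (z $ Inr j) ^ (\<beta> j))"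

definition laurent_coef :: "(complex^('a::finite + 'b::finite option) \<Rightarrow> complex) \<Rightarrow> nat \<Rightarrow> int \<Rightarrow> complex^('a + 'b) \<Rightarrow> complex" where
  "laurent_coef P m \<nu> z = infsum (laurent_term P m \<nu> z) (laurent_idx m \<nu>)"

end

theory Submission
  imports Defs "HOL-Complex_Analysis.Complex_Analysis"
begin

no_notation fps_nth (infixl "$" 75)

definition mnm :: "('n::finite \<Rightarrow> nat) \<Rightarrow> complex^'n \<Rightarrow> complex" where
  "mnm \<alpha> h = (\<Prod>i\<in>UNIV. (h$i)^(\<alpha> i))"

definition mdeg :: "('n::finite \<Rightarrow> nat) \<Rightarrow> nat" where
  "mdeg \<alpha> = (\<Sum>i\<in>UNIV. \<alpha> i)"

definition pser :: "(('n::finite \<Rightarrow> nat) \<Rightarrow> complex) \<Rightarrow> complex^'n \<Rightarrow> complex" where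
  "pser a h = (\<Sum>\<^sub>\<infinity>\<alpha>. a \<alpha> * mnm \<alpha> h)"

lemma geom_finite_le:
  fixes q :: real
  assumes "0 \<le> q" "q < 1" "finite J"
  shows "(\<Sum>j\<in>J. q ^ j) \<le> 1 / (1 - q)"
proof -
  have "(\<Sum>j\<in>J. q ^ j) \<le> (\<Sum>j. q ^ j)"
    by (rule sum_le_suminf) (use assms in \<open>auto intro: summable_geometric\<close>)
  also have "\<dots> = 1 / (1 - q)" using assms by (simp add: suminf_geometric)
  finally show ?thesis .
qed

lemma mdeg_summable:
  fixes q :: real
  assumes q: "0 \<le> q" "q < 1"
  shows "(\<lambda>\<alpha>::'n::finite \<Rightarrow> nat. q ^ mdeg \<alpha>) summable_on UNIV"
proof (rule nonneg_bdd_above_summable_on)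
  show "0 \<le> q ^ mdeg \<alpha>" for \<alpha> using q by simp
  show "bdd_above (sum (\<lambda>\<alpha>::'n \<Rightarrow> nat. q ^ mdeg \<alpha>) ` {F. F \<subseteq> UNIV \<and> finite F})"
  proof (rule bdd_aboveI2)
    fix F :: "('n \<Rightarrow> nat) set" assume "F \<in> {F. F \<subseteq> UNIV \<and> finite F}"
    then have fin: "finite F" by auto
    define B where "B i = (\<lambda>\<alpha>. \<alpha> i) ` F" for i
    have finB: "finite (B i)" for i using fin by (simp add: B_def)
    have sub: "F \<subseteq> PiE UNIV B" by (auto simp: B_def PiE_def Pi_def extensional_def)
    have "(\<Sum>\<alpha>\<in>F. q ^ mdeg \<alpha>) = (\<Sum>\<alpha>\<in>F. \<Prod>i\<in>UNIV. q ^ \<alpha> i)"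
      by (simp add: mdeg_def power_sum)
    also have "\<dots> \<le> (\<Sum>\<alpha>\<in>PiE UNIV B. \<Prod>i\<in>UNIV. q ^ \<alpha> i)"
      by (rule sum_mono2) (use sub finB q in \<open>auto intro!: finite_PiE prod_nonneg\<close>)
    also have "\<dots> = (\<Prod>i\<in>UNIV. \<Sum>j\<in>B i. q ^ j)"
      by (rule prod_sum_PiE[symmetric]) (auto simp: finB)
    also have "\<dots> \<le> (\<Prod>i\<in>(UNIV::'n set). 1 / (1 - q))"
      by (rule prod_mono) (use q finB in \<open>auto intro: geom_finite_le sum_nonneg\<close>)
    finally show "(\<Sum>\<alpha>\<in>F. q ^ mdeg \<alpha>) \<le> (\<Prod>i\<in>(UNIV::'n set). 1 / (1 - q))" .
  qed
qed

lemma lin_geom_bounded: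
  fixes t :: real
  assumes "0 \<le> t" "t < 1"
  shows "\<exists>C. \<forall>d::nat. real (d + 1) * t ^ d \<le> C"
proof -
  have "(\<lambda>d. real d * t ^ d + t ^ d) \<longlonglongrightarrow> 0 + 0"
    by (intro tendsto_add powser_times_n_limit_0 LIMSEQ_power_zero) (use assms in auto)
  then have "Bseq (\<lambda>d. real d * t ^ d + t ^ d)" by (intro convergent_imp_Bseq) (auto simp: convergent_def)
  then obtain C where "\<And>d. norm (real d * t ^ d + t ^ d) \<le> C" by (auto simp: Bseq_def)
  then show ?thesis by (intro exI[of _ C]) (auto simp: algebra_simps abs_le_iff)
qed

lemma lin_mdeg_summable:
  fixes t :: real
  assumes "0 \<le> t" "t < 1"
  shows "(\<lambda>\<alpha>::'n::finite \<Rightarrow> nat. real (mdeg \<alpha> + 1) * t ^ mdeg \<alpha>) summable_on UNIV"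
proof -
  define s where "s = (1 + t) / 2"
  have s: "0 < s" "s < 1" "t \<le> s" "t < s" using assms by (auto simp: s_def)
  have "0 \<le> t / s" "t / s < 1" using s assms by (auto simp: field_simps)
  then obtain C where C: "\<And>d::nat. real (d + 1) * (t / s) ^ d \<le> C" using lin_geom_bounded by blast
  show ?thesis
  proof (rule summable_on_comparison_test)
    show "(\<lambda>\<alpha>::'n \<Rightarrow> nat. C * s ^ mdeg \<alpha>) summable_on UNIV"
      by (intro summable_on_cmult_right mdeg_summable) (use s in auto)
    fix \<alpha> :: "'n \<Rightarrow> nat"
    show "0 \<le> real (mdeg \<alpha> + 1) * t ^ mdeg \<alpha>" using assms by simp
    have "real (mdeg \<alpha> + 1) * t ^ mdeg \<alpha> = (real (mdeg \<alpha> + 1) * (t / s) ^ mdeg \<alpha>) * s ^ mdeg \<alpha>"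
      using s by (simp add: power_divide)
    also have "\<dots> \<le> C * s ^ mdeg \<alpha>" by (intro mult_right_mono C) (use s in auto)
    finally show "real (mdeg \<alpha> + 1) * t ^ mdeg \<alpha> \<le> C * s ^ mdeg \<alpha>" .
  qed
qed

lemma norm_mnm_le:
  assumes "\<And>i. norm (h$i) \<le> \<rho>"
  shows "norm (mnm \<alpha> h) \<le> \<rho> ^ mdeg \<alpha>"
proof -
  have "norm (mnm \<alpha> h) = (\<Prod>i\<in>UNIV. norm (h$i) ^ \<alpha> i)" by (simp add: mnm_def prod_norm[symmetric] norm_power)
  also have "\<dots> \<le> (\<Prod>i\<in>UNIV. \<rho> ^ \<alpha> i)" by (intro prod_mono conjI power_mono assms) auto
  also have "\<dots> = \<rho> ^ mdeg \<alpha>" by (simp add: mdeg_def power_sum)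
  finally show ?thesis .
qed

lemma pser_term_bound:
  assumes aM: "\<And>\<alpha>. norm (a \<alpha>) * \<rho> ^ mdeg \<alpha> \<le> M" and "0 < \<rho>"
    and h: "\<And>i. norm (h$i) \<le> \<rho>'"
  shows "norm (a \<alpha> * mnm \<alpha> h) \<le> M * (\<rho>' / \<rho>) ^ mdeg \<alpha>"
proof -
  have "0 \<le> \<rho>'" using h[of undefined] norm_ge_zero order_trans by blast
  have "norm (a \<alpha> * mnm \<alpha> h) \<le> norm (a \<alpha>) * \<rho>' ^ mdeg \<alpha>"
    unfolding norm_mult by (intro mult_left_mono norm_mnm_le h) auto
  also have "\<dots> = (norm (a \<alpha>) * \<rho> ^ mdeg \<alpha>) * (\<rho>' / \<rho>) ^ mdeg \<alpha>"
    using \<open>0 < \<rho>\<close> by (simp add: power_divide)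
  also have "\<dots> \<le> M * (\<rho>' / \<rho>) ^ mdeg \<alpha>"
    by (intro mult_right_mono aM) (use \<open>0 < \<rho>\<close> \<open>0 \<le> \<rho>'\<close> in auto)
  finally show ?thesis .
qed

lemma pser_abs_summable:
  assumes aM: "\<And>\<alpha>. norm (a \<alpha>) * \<rho> ^ mdeg \<alpha> \<le> M" and "0 < \<rho>"
    and h: "\<And>i. norm (h$i) \<le> \<rho>'" and "\<rho>' < \<rho>"
  shows "(\<lambda>\<alpha>. norm (a \<alpha> * mnm \<alpha> h)) summable_on UNIV"
proof -
  have "0 \<le> \<rho>'" using h[of undefined] norm_ge_zero order_trans by blast
  show ?thesis
  proof (rule summable_on_comparison_test)
    show "(\<lambda>\<alpha>. M * (\<rho>' / \<rho>) ^ mdeg \<alpha>) summable_on UNIV"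
      by (intro summable_on_cmult_right mdeg_summable) (use assms \<open>0 \<le> \<rho>'\<close> in auto)
  qed (use pser_term_bound[OF aM \<open>0 < \<rho>\<close> h] in auto)
qed

lemma pser_summable:
  assumes aM: "\<And>\<alpha>. norm (a \<alpha>) * \<rho> ^ mdeg \<alpha> \<le> M" and "0 < \<rho>"
    and h: "\<And>i. norm (h$i) \<le> \<rho>'" and "\<rho>' < \<rho>"
  shows "(\<lambda>\<alpha>. a \<alpha> * mnm \<alpha> h) summable_on UNIV"
  using pser_abs_summable[OF assms] summable_on_iff_abs_summable_on_complex by blast


definition dmnm :: "('n::finite \<Rightarrow> nat) \<Rightarrow> complex^'n \<Rightarrow> complex^'n \<Rightarrow> complex" where
  "dmnm \<alpha> x v = (\<Sum>i\<in>UNIV. (of_nat (\<alpha> i) * v$i * (x$i)^(\<alpha> i - 1)) * (\<Prod>j\<in>UNIV-{i}. (x$j)^(\<alpha> j)))"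

lemma mnm_has_derivative:
  fixes \<alpha> :: "'n::finite \<Rightarrow> nat"
  shows "(mnm \<alpha> has_derivative dmnm \<alpha> x) (at x within S)"
proof -
  have "((\<lambda>h::complex^'n. (\<Prod>i\<in>UNIV. (h$i)^(\<alpha> i))) has_derivative
      (\<lambda>v. \<Sum>i\<in>UNIV. (of_nat (\<alpha> i) * v$i * (x$i)^(\<alpha> i - 1)) * (\<Prod>j\<in>UNIV-{i}. (x$j)^(\<alpha> j)))) (at x within S)"
    by (intro has_derivative_prod has_derivative_power bounded_linear_imp_has_derivative bounded_linear_vec_nth)
  then show ?thesis unfolding mnm_def[abs_def] dmnm_def[abs_def] .
qed

lemma dmnm_scale: "dmnm \<alpha> x (c *s v) = c * dmnm \<alpha> x v"
  by (simp add: dmnm_def sum_distrib_left algebra_simps)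

lemma dmnm_axis:
  fixes x :: "complex^'n::finite"
  shows "dmnm \<alpha> x (axis k 1) = of_nat (\<alpha> k) * (x$k)^(\<alpha> k - 1) * (\<Prod>j\<in>UNIV-{k}. (x$j)^(\<alpha> j))"
proof -
  have "dmnm \<alpha> x (axis k 1) = (\<Sum>i\<in>{k}. (of_nat (\<alpha> i) * (axis k 1)$i * (x$i)^(\<alpha> i - 1)) * (\<Prod>j\<in>UNIV-{i}. (x$j)^(\<alpha> j)))"
    unfolding dmnm_def by (rule sum.mono_neutral_right) (auto simp: axis_def)
  then show ?thesis by (simp add: axis_def)
qed

lemma prod_remove_k:
  fixes g :: "'n::finite \<Rightarrow> complex"
  shows "(\<Prod>j\<in>UNIV. g j) = g k * (\<Prod>j\<in>UNIV-{k}. g j)"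
  by (simp add: prod.remove)

lemma dmnm_axis_up: "dmnm (\<beta>(k := Suc (\<beta> k))) x (axis k 1) = of_nat (Suc (\<beta> k)) * mnm \<beta> x"
proof -
  have "(\<Prod>j\<in>UNIV-{k}. (x$j)^((\<beta>(k := Suc (\<beta> k))) j)) = (\<Prod>j\<in>UNIV-{k}. (x$j)^(\<beta> j))"
    by (rule prod.cong) auto
  then show ?thesis by (simp add: dmnm_axis mnm_def prod_remove_k[of _ k])
qed

lemma norm_dmnm_le:
  assumes "\<And>i. norm (x$i) \<le> \<rho>" "0 < \<rho>"
  shows "\<rho> * norm (dmnm \<alpha> x v) \<le> real (mdeg \<alpha>) * \<rho> ^ mdeg \<alpha> * norm v"
proof -
  have trm: "\<rho> * norm ((of_nat (\<alpha> i) * v$i * (x$i)^(\<alpha> i - 1)) * (\<Prod>j\<in>UNIV-{i}. (x$j)^(\<alpha> j)))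
     \<le> real (\<alpha> i) * \<rho> ^ mdeg \<alpha> * norm v" for i
  proof (cases "\<alpha> i = 0")
    case True then show ?thesis by simp
  next
    case False
    have n1: "norm (v$i) \<le> norm v" by (rule Finite_Cartesian_Product.norm_nth_le)
    have n2: "norm ((x$i)^(\<alpha> i - 1)) \<le> \<rho> ^ (\<alpha> i - 1)"
      unfolding norm_power by (intro power_mono assms) auto
    have n3: "norm (\<Prod>j\<in>UNIV-{i}. (x$j)^(\<alpha> j)) \<le> (\<Prod>j\<in>UNIV-{i}. \<rho> ^ \<alpha> j)"
      unfolding prod_norm[symmetric] norm_power by (intro prod_mono conjI power_mono assms) auto
    have "\<rho> * norm ((of_nat (\<alpha> i) * v$i * (x$i)^(\<alpha> i - 1)) * (\<Prod>j\<in>UNIV-{i}. (x$j)^(\<alpha> j)))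
        = real (\<alpha> i) * norm (v$i) * (\<rho> * norm ((x$i)^(\<alpha> i - 1))) * norm (\<Prod>j\<in>UNIV-{i}. (x$j)^(\<alpha> j))"
      by (simp add: norm_mult)
    also have "\<dots> \<le> real (\<alpha> i) * norm v * (\<rho> * \<rho> ^ (\<alpha> i - 1)) * (\<Prod>j\<in>UNIV-{i}. \<rho> ^ \<alpha> j)"
      using assms by (intro mult_mono n1 n2 n3 mult_left_mono) (auto intro: prod_nonneg)
    also have "real (\<alpha> i) * norm v * (\<rho> * \<rho> ^ (\<alpha> i - 1)) * (\<Prod>j\<in>UNIV-{i}. \<rho> ^ \<alpha> j)
       = real (\<alpha> i) * \<rho> ^ mdeg \<alpha> * norm v"
    proof -
      have "\<rho> * \<rho> ^ (\<alpha> i - 1) = \<rho> ^ \<alpha> i" using False by (simp flip: power_Suc)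
      moreover have "\<rho> ^ \<alpha> i * (\<Prod>j\<in>UNIV-{i}. \<rho> ^ \<alpha> j) = \<rho> ^ mdeg \<alpha>"
        by (simp add: mdeg_def power_sum prod.remove[of UNIV i])
      ultimately show ?thesis by (simp add: algebra_simps)
    qed
    finally show ?thesis .
  qed
  have "\<rho> * norm (dmnm \<alpha> x v) \<le> (\<Sum>i\<in>UNIV. \<rho> * norm ((of_nat (\<alpha> i) * v$i * (x$i)^(\<alpha> i - 1)) * (\<Prod>j\<in>UNIV-{i}. (x$j)^(\<alpha> j))))"
    unfolding dmnm_def sum_distrib_left[symmetric] using assms by (intro mult_left_mono norm_sum) auto
  also have "\<dots> \<le> (\<Sum>i\<in>UNIV. real (\<alpha> i) * \<rho> ^ mdeg \<alpha> * norm v)" by (intro sum_mono trm)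
  also have "\<dots> = real (mdeg \<alpha>) * \<rho> ^ mdeg \<alpha> * norm v" by (simp add: mdeg_def sum_distrib_right)
  finally show ?thesis .
qed

definition en :: "nat \<Rightarrow> ('n::finite \<Rightarrow> nat)" where
  "en = from_nat_into UNIV"

lemma bij_en: "bij_betw (en :: nat \<Rightarrow> ('n::finite \<Rightarrow> nat)) UNIV UNIV"
proof -
  have "inj (\<lambda>k::nat. (\<lambda>_::'n. k))" by (rule injI) (drule fun_cong, simp)
  then have "infinite (range (\<lambda>k::nat. (\<lambda>_::'n. k)))" using finite_imageD infinite_UNIV_nat by blast
  then have "infinite (UNIV :: ('n \<Rightarrow> nat) set)" by (meson finite_subset subset_UNIV)
  moreover have "countable (UNIV :: ('n \<Rightarrow> nat) set)" by (rule countableI_type)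
  ultimately show ?thesis unfolding en_def by (intro bij_betw_from_nat_into)
qed

lemma en_sums:
  fixes F :: "('n::finite \<Rightarrow> nat) \<Rightarrow> 'b::banach"
  assumes "(\<lambda>\<alpha>. norm (F \<alpha>)) summable_on UNIV"
  shows "(\<lambda>n. F (en n)) sums (infsum F UNIV)" and "summable (\<lambda>n. norm (F (en n)))"
proof -
  have "F summable_on UNIV" using assms abs_summable_summable by blast
  then have "(F has_sum infsum F UNIV) UNIV" by (simp add: has_sum_infsum)
  then have "((\<lambda>n. F (en n)) has_sum infsum F UNIV) UNIV" using has_sum_reindex_bij_betw[OF bij_en] by blast
  then show "(\<lambda>n. F (en n)) sums (infsum F UNIV)" by (rule has_sum_imp_sums)
  have "(\<lambda>n. norm (F (en n))) summable_on UNIV" using summable_on_reindex_bij_betw[OF bij_en, where f="\<lambda>\<alpha>. norm (F \<alpha>)"] assms by simp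
  then show "summable (\<lambda>n. norm (F (en n)))" by (rule summable_on_imp_summable)
qed


lemma pser_has_derivative:
  fixes a :: "('n::finite \<Rightarrow> nat) \<Rightarrow> complex" and h0 :: "complex^'n"
  assumes aM: "\<And>\<alpha>. norm (a \<alpha>) * \<rho> ^ mdeg \<alpha> \<le> M" and \<rho>: "0 < \<rho>" and h0: "\<And>i. norm (h0$i) < \<rho>"
  shows "(\<lambda>\<alpha>. norm (a \<alpha> * dmnm \<alpha> h0 v)) summable_on UNIV"
    and "(pser a has_derivative (\<lambda>v. \<Sum>\<^sub>\<infinity>\<alpha>. a \<alpha> * dmnm \<alpha> h0 v)) (at h0)"
proof -
  have M0: "0 \<le> M"
    by (rule order_trans[OF mult_nonneg_nonneg[OF norm_ge_zero zero_le_power[OF less_imp_le[OF \<rho>]]] aM])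
  define s where "s = Max (range (\<lambda>i. norm (h0$i)))"
  have s_lt: "s < \<rho>" unfolding s_def using h0 by (subst Max_less_iff) auto
  have hs: "norm (h0$i) \<le> s" for i unfolding s_def by (rule Max_ge) auto
  have s0: "0 \<le> s" using hs[of undefined] norm_ge_zero order_trans by blast
  define \<rho>1 where "\<rho>1 = (s + \<rho>) / 2"
  have \<rho>1: "s < \<rho>1" "\<rho>1 < \<rho>" "0 < \<rho>1" using s_lt s0 by (auto simp: \<rho>1_def)
  define S where "S = ball h0 (\<rho>1 - s)"
  have inS: "norm (h$i) \<le> \<rho>1" if "h \<in> S" for h i
  proof -
    have "h$i = h0$i + (h - h0)$i" by simp
    then have "norm (h$i) \<le> norm (h0$i) + norm ((h - h0)$i)" by (metis norm_triangle_ineq)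
    also have "norm ((h - h0)$i) \<le> norm (h - h0)" by (rule Finite_Cartesian_Product.norm_nth_le)
    also have "norm (h - h0) < \<rho>1 - s" using that by (simp add: S_def dist_norm norm_minus_commute)
    finally show ?thesis using hs[of i] by simp
  qed
  have h0S: "h0 \<in> S" using \<rho>1 by (simp add: S_def)
  have openS: "open S" and convS: "convex S" by (auto simp: S_def)
  define t where "t = \<rho>1 / \<rho>"
  have t: "0 \<le> t" "t < 1" using \<rho>1 \<rho> by (auto simp: t_def)
  define B where "B \<alpha> = M / \<rho>1 * (real (mdeg \<alpha> + 1) * t ^ mdeg \<alpha>)" for \<alpha> :: "'n \<Rightarrow> nat"
  have B0: "0 \<le> B \<alpha>" for \<alpha> using M0 \<rho>1 t by (simp add: B_def)
  have Bsum': "B summable_on UNIV" unfolding B_def by (intro summable_on_cmult_right lin_mdeg_summable t)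
  have Bsum: "(\<lambda>\<alpha>. norm (B \<alpha>)) summable_on UNIV" using Bsum' B0 by (simp add: abs_of_nonneg)
  have dbound: "norm (a \<alpha> * dmnm \<alpha> h v) \<le> B \<alpha> * norm v" if "h \<in> S" for h \<alpha> v
  proof -
    have "\<rho>1 * norm (dmnm \<alpha> h v) \<le> real (mdeg \<alpha>) * \<rho>1 ^ mdeg \<alpha> * norm v"
      by (rule norm_dmnm_le) (use inS[OF that] \<rho>1 in auto)
    then have d1: "norm (dmnm \<alpha> h v) \<le> real (mdeg \<alpha>) * \<rho>1 ^ mdeg \<alpha> * norm v / \<rho>1"
      using \<rho>1 by (simp add: field_simps)
    have "norm (a \<alpha> * dmnm \<alpha> h v) \<le> norm (a \<alpha>) * (real (mdeg \<alpha>) * \<rho>1 ^ mdeg \<alpha> * norm v / \<rho>1)"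
      unfolding norm_mult by (intro mult_left_mono d1) auto
    also have "\<dots> = (norm (a \<alpha>) * \<rho> ^ mdeg \<alpha>) * (real (mdeg \<alpha>) * t ^ mdeg \<alpha> * norm v / \<rho>1)"
      using \<rho> by (simp add: t_def power_divide field_simps)
    also have "\<dots> \<le> M * (real (mdeg \<alpha>) * t ^ mdeg \<alpha> * norm v / \<rho>1)"
      by (intro mult_right_mono aM) (use t \<rho>1 in auto)
    also have "\<dots> \<le> M * (real (mdeg \<alpha> + 1) * t ^ mdeg \<alpha> * norm v / \<rho>1)"
      by (intro mult_left_mono divide_right_mono mult_right_mono) (use M0 t \<rho>1 in auto)
    also have "\<dots> = B \<alpha> * norm v" by (simp add: B_def field_simps)
    finally show ?thesis .
  qed
  have dsum: "(\<lambda>\<alpha>. norm (a \<alpha> * dmnm \<alpha> h v)) summable_on UNIV" if "h \<in> S" for h v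
  proof (rule summable_on_comparison_test)
    show "(\<lambda>\<alpha>. B \<alpha> * norm v) summable_on UNIV"
      using Bsum B0 by (intro summable_on_cmult_left) simp
  qed (use dbound[OF that] in auto)
  then show "(\<lambda>\<alpha>. norm (a \<alpha> * dmnm \<alpha> h0 v)) summable_on UNIV" using h0S by blast
  define f where "f n (h::complex^'n) = a (en n) * mnm (en n) h" for n h
  define f' where "f' n (h::complex^'n) v = a (en n) * dmnm (en n) h v" for n h v
  define g' where "g' (h::complex^'n) v = suminf (\<lambda>n. f' n h v)" for h v
  define Bn where "Bn n = B (en n)" for n
  have Bn_sum: "summable Bn" using en_sums(2)[OF Bsum] B0 unfolding Bn_def[abs_def] by (simp add: abs_of_nonneg)
  have Bn0: "0 \<le> Bn n" for n using B0 by (simp add: Bn_def)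
  have f'b: "norm (f' n h v) \<le> Bn n * norm v" if "h \<in> S" for n h v
    unfolding f'_def Bn_def by (rule dbound[OF that])
  have psum: "(\<lambda>\<alpha>. norm (a \<alpha> * mnm \<alpha> h)) summable_on UNIV" if "h \<in> S" for h
    by (rule pser_abs_summable[OF aM \<rho>, of h \<rho>1]) (use inS[OF that] \<rho>1 in auto)
  have "\<exists>g. \<forall>x\<in>S. (\<lambda>n. f n x) sums (g x) \<and> (g has_derivative g' x) (at x within S)"
  proof (rule has_derivative_series[OF convS _ _ h0S])
    show "(f n has_derivative f' n x) (at x within S)" if "x \<in> S" for n x
      unfolding f_def[abs_def] f'_def[abs_def] by (intro has_derivative_mult_right mnm_has_derivative)
    show "(\<lambda>n. f n h0) sums pser a h0"
      unfolding f_def pser_def by (rule en_sums(1)[OF psum[OF h0S]])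
    fix e :: real assume "0 < e"
    obtain N where N: "\<And>n. n \<ge> N \<Longrightarrow> norm (\<Sum>i. Bn (i + n)) < e"
      using suminf_exist_split[OF \<open>0 < e\<close> Bn_sum] by blast
    show "\<forall>\<^sub>F n in sequentially. \<forall>x\<in>S. \<forall>v. norm (sum (\<lambda>i. f' i x v) {..<n} - g' x v) \<le> e * norm v"
    proof (rule eventually_sequentiallyI[of N], intro ballI allI)
      fix n x and v :: "complex^'n" assume n: "N \<le> n" and x: "x \<in> S"
      have sBv: "summable (\<lambda>i. Bn i * norm v)" by (intro summable_mult2 Bn_sum)
      have sf: "summable (\<lambda>i. f' i x v)"
        by (rule summable_comparison_test'[OF sBv]) (rule f'b[OF x])
      have sft: "summable (\<lambda>i. norm (f' (i + n) x v))"
        by (rule summable_comparison_test'[OF summable_ignore_initial_segment[OF sBv, of n]]) (use f'b[OF x] in auto)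
      have "sum (\<lambda>i. f' i x v) {..<n} - g' x v = - (\<Sum>i. f' (i + n) x v)"
        unfolding g'_def using suminf_split_initial_segment[OF sf, of n] by simp
      then have "norm (sum (\<lambda>i. f' i x v) {..<n} - g' x v) = norm (\<Sum>i. f' (i + n) x v)" by simp
      also have "\<dots> \<le> (\<Sum>i. norm (f' (i + n) x v))" by (rule summable_norm[OF sft])
      also have "\<dots> \<le> (\<Sum>i. Bn (i + n) * norm v)"
        by (rule suminf_le) (use f'b[OF x] sft summable_ignore_initial_segment[OF sBv, of n] in auto)
      also have "\<dots> = (\<Sum>i. Bn (i + n)) * norm v"
        by (rule suminf_mult2[symmetric]) (rule summable_ignore_initial_segment[OF Bn_sum])
      also have "\<dots> \<le> e * norm v"
      proof (intro mult_right_mono)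
        have "(\<Sum>i. Bn (i + n)) \<le> norm (\<Sum>i. Bn (i + n))" by simp
        then show "(\<Sum>i. Bn (i + n)) \<le> e" using N[OF n] by linarith
      qed simp
      finally show "norm (sum (\<lambda>i. f' i x v) {..<n} - g' x v) \<le> e * norm v" .
    qed
  qed
  then obtain g where g: "\<And>x. x \<in> S \<Longrightarrow> (\<lambda>n. f n x) sums (g x) \<and> (g has_derivative g' x) (at x within S)"
    by blast
  have geq: "g x = pser a x" if "x \<in> S" for x
  proof -
    have "(\<lambda>n. f n x) sums pser a x"
      unfolding f_def pser_def by (rule en_sums(1)[OF psum[OF that]])
    then show ?thesis using g[OF that] sums_unique2 by blast
  qed
  have "(g has_derivative g' h0) (at h0)" using g[OF h0S] at_within_open[OF h0S openS] by simp
  then have "(pser a has_derivative g' h0) (at h0)"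
    by (rule has_derivative_transform_within_open[OF _ openS h0S]) (rule geq)
  moreover have "g' h0 = (\<lambda>v. \<Sum>\<^sub>\<infinity>\<alpha>. a \<alpha> * dmnm \<alpha> h0 v)"
  proof
    fix v
    have "(\<lambda>n. f' n h0 v) sums (\<Sum>\<^sub>\<infinity>\<alpha>. a \<alpha> * dmnm \<alpha> h0 v)"
      unfolding f'_def by (rule en_sums(1)[OF dsum[OF h0S]])
    then show "g' h0 v = (\<Sum>\<^sub>\<infinity>\<alpha>. a \<alpha> * dmnm \<alpha> h0 v)" unfolding g'_def by (simp add: sums_iff)
  qed
  ultimately show "(pser a has_derivative (\<lambda>v. \<Sum>\<^sub>\<infinity>\<alpha>. a \<alpha> * dmnm \<alpha> h0 v)) (at h0)" by simp
qed


definition psr :: "(complex^'n::finite \<Rightarrow> complex) \<Rightarrow> complex^'n \<Rightarrow> (('n \<Rightarrow> nat) \<Rightarrow> complex) \<Rightarrow> real \<Rightarrow> bool" where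
  "psr f p a r \<longleftrightarrow> 0 < r \<and> (\<forall>\<rho>. 0 < \<rho> \<and> \<rho> < r \<longrightarrow> (\<exists>M. \<forall>\<alpha>. norm (a \<alpha>) * \<rho> ^ mdeg \<alpha> \<le> M)) \<and>
     (\<forall>h. (\<forall>i. norm (h$i) < r) \<longrightarrow> f (p + h) = pser a h)"

definition dcoef :: "'n::finite \<Rightarrow> (('n \<Rightarrow> nat) \<Rightarrow> complex) \<Rightarrow> ('n \<Rightarrow> nat) \<Rightarrow> complex" where
  "dcoef k a \<beta> = of_nat (Suc (\<beta> k)) * a (\<beta>(k := Suc (\<beta> k)))"

definition pdisc :: "complex^'n::finite \<Rightarrow> real \<Rightarrow> (complex^'n) set" where
  "pdisc p r = {x. \<forall>i. norm ((x - p)$i) < r}"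

lemma open_pdisc: "open (pdisc (p::complex^'n::finite) r)"
proof -
  have "pdisc p r = (\<Inter>i\<in>UNIV. {x. norm ((x - p)$i) < r})" by (auto simp: pdisc_def)
  moreover have "open {x. norm ((x - p)$i) < r}" for i
  proof (rule open_Collect_less)
    have c: "continuous_on UNIV (\<lambda>x::complex^'n. x$i)" by (rule linear_continuous_on[OF bounded_linear_vec_nth])
    have "continuous_on UNIV (\<lambda>x::complex^'n. x$i - p$i)" by (intro continuous_intros c)
    then have "continuous_on UNIV (\<lambda>x. (x - p)$i)" by simp
    then show "continuous_on UNIV (\<lambda>x. norm ((x - p)$i))" by (intro continuous_intros)
  qed auto
  ultimately show ?thesis by auto
qed

lemma mdeg_up: "mdeg (\<beta>(k := Suc (\<beta> k))) = Suc (mdeg \<beta>)"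
proof -
  have "mdeg (\<beta>(k := Suc (\<beta> k))) = Suc (\<beta> k) + (\<Sum>i\<in>UNIV-{k}. (\<beta>(k := Suc (\<beta> k))) i)"
    unfolding mdeg_def by (simp add: sum.remove[of UNIV k])
  also have "(\<Sum>i\<in>UNIV-{k}. (\<beta>(k := Suc (\<beta> k))) i) = (\<Sum>i\<in>UNIV-{k}. \<beta> i)" by (rule sum.cong) auto
  also have "Suc (\<beta> k) + (\<Sum>i\<in>UNIV-{k}. \<beta> i) = Suc (mdeg \<beta>)" unfolding mdeg_def by (simp add: sum.remove[of UNIV k])
  finally show ?thesis .
qed

lemma le_mdeg: "\<beta> k \<le> mdeg \<beta>"
  unfolding mdeg_def by (rule member_le_sum) auto

lemma bounded_linear_axis: "bounded_linear (axis k :: complex \<Rightarrow> complex^'n::finite)"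
proof (rule bounded_linear_intro[where K=1])
  show "axis k (x + y) = (axis k x + axis k y :: complex^'n)" for x y by (simp add: vec_eq_iff axis_def)
  show "axis k (r *\<^sub>R x) = (r *\<^sub>R axis k x :: complex^'n)" for r x by (simp add: vec_eq_iff axis_def)
  show "norm (axis k x :: complex^'n) \<le> norm x * 1" for x
  proof -
    have "norm (axis k x :: complex^'n) \<le> (\<Sum>i\<in>UNIV. norm ((axis k x :: complex^'n)$i))"
      unfolding norm_vec_def by (rule L2_set_le_sum) auto
    also have "\<dots> = (\<Sum>i\<in>{k}. norm ((axis k x :: complex^'n)$i))"
      by (rule sum.mono_neutral_right) (auto simp: axis_def)
    finally show ?thesis by simp
  qed
qed

lemma axis_scale: "axis k t = t *s (axis k 1 :: complex^'n::finite)"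
  by (simp add: vec_eq_iff axis_def)

lemma psr_deriv:
  fixes f :: "complex^'n::finite \<Rightarrow> complex"
  assumes "psr f p a r" and x: "x \<in> pdisc p r"
  shows "\<exists>L. (f has_derivative L) (at x) \<and> (\<forall>c v. L (c *s v) = c * L v) \<and>
      (\<forall>k. L (axis k 1) = pser (dcoef k a) (x - p))"
proof -
  define h0 where "h0 = x - p"
  have r: "0 < r" and bnd: "\<And>\<rho>. 0 < \<rho> \<Longrightarrow> \<rho> < r \<Longrightarrow> \<exists>M. \<forall>\<alpha>. norm (a \<alpha>) * \<rho> ^ mdeg \<alpha> \<le> M"
    and eq: "\<And>h. (\<forall>i. norm (h$i) < r) \<Longrightarrow> f (p + h) = pser a h"
    using assms(1) unfolding psr_def by auto
  define s where "s = Max (range (\<lambda>i. norm (h0$i)))"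
  have s_lt: "s < r" unfolding s_def using x by (subst Max_less_iff) (auto simp: pdisc_def h0_def)
  have hs: "norm (h0$i) \<le> s" for i unfolding s_def by (rule Max_ge) auto
  have s0: "0 \<le> s" using hs[of undefined] norm_ge_zero order_trans by blast
  define \<rho> where "\<rho> = (s + r) / 2"
  have \<rho>: "0 < \<rho>" "\<rho> < r" "s < \<rho>" using s_lt s0 by (auto simp: \<rho>_def)
  obtain M where M: "\<And>\<alpha>. norm (a \<alpha>) * \<rho> ^ mdeg \<alpha> \<le> M" using bnd[OF \<rho>(1,2)] by blast
  have h0: "norm (h0$i) < \<rho>" for i using hs[of i] \<rho> by linarith
  define D where "D v = (\<Sum>\<^sub>\<infinity>\<alpha>. a \<alpha> * dmnm \<alpha> h0 v)" for v
  have dsum: "(\<lambda>\<alpha>. norm (a \<alpha> * dmnm \<alpha> h0 v)) summable_on UNIV" for v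
    by (rule pser_has_derivative(1)[OF M \<rho>(1) h0])
  have dD: "(pser a has_derivative D) (at h0)"
    unfolding D_def[abs_def] by (rule pser_has_derivative(2)[OF M \<rho>(1) h0])
  have "((\<lambda>y. pser a (y - p)) has_derivative D) (at x)"
  proof -
    have "((\<lambda>y. y - p) has_derivative (\<lambda>v. v)) (at x)" by (auto intro!: derivative_eq_intros)
    from has_derivative_compose[OF this] dD show ?thesis by (simp add: h0_def)
  qed
  then have fD: "(f has_derivative D) (at x)"
  proof (rule has_derivative_transform_within_open[OF _ open_pdisc x])
    fix y assume "y \<in> pdisc p r"
    then show "pser a (y - p) = f y" using eq[of "y - p"] by (auto simp: pdisc_def)
  qed
  have lin: "D (c *s v) = c * D v" for c v
  proof -
    have "D (c *s v) = (\<Sum>\<^sub>\<infinity>\<alpha>. c * (a \<alpha> * dmnm \<alpha> h0 v))" unfolding D_def by (simp add: dmnm_scale algebra_simps)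
    also have "\<dots> = c * D v" unfolding D_def by (rule infsum_cmult_right')
    finally show ?thesis .
  qed
  have ax: "D (axis k 1) = pser (dcoef k a) h0" for k
  proof -
    define up where "up \<beta> = \<beta>(k := Suc (\<beta> k))" for \<beta> :: "'n \<Rightarrow> nat"
    define T where "T \<alpha> = a \<alpha> * dmnm \<alpha> h0 (axis k 1)" for \<alpha>
    have inj: "inj up"
    proof (rule injI)
      fix \<beta> \<beta>' assume "up \<beta> = up \<beta>'"
      then have "\<forall>j. up \<beta> j = up \<beta>' j" by simp
      then show "\<beta> = \<beta>'" unfolding up_def by (metis fun_upd_apply Suc_inject ext)
    qed
    have T0: "T \<alpha> = 0" if "\<alpha> \<notin> range up" for \<alpha>
    proof -
      have "\<alpha> k = 0"
      proof (rule ccontr)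
        assume "\<alpha> k \<noteq> 0"
        then have "\<alpha> = up (\<alpha>(k := \<alpha> k - 1))" by (auto simp: up_def fun_eq_iff)
        then show False using that by blast
      qed
      then show ?thesis by (simp add: T_def dmnm_axis)
    qed
    have "D (axis k 1) = infsum T UNIV" by (simp add: D_def T_def[abs_def])
    also have "\<dots> = infsum T (range up)"
      by (rule infsum_cong_neutral) (use T0 in auto)
    also have "\<dots> = infsum (T \<circ> up) UNIV" by (rule infsum_reindex[OF inj])
    also have "\<dots> = pser (dcoef k a) h0"
      unfolding pser_def by (rule infsum_cong) (simp add: T_def up_def dmnm_axis_up dcoef_def)
    finally show ?thesis .
  qed
  show ?thesis using fD lin ax by (auto simp: h0_def)
qed

lemma psr_dcoef_bound:
  assumes "psr f p a r" "0 < \<rho>" "\<rho> < r"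
  shows "\<exists>M. \<forall>\<beta>. norm (dcoef k a \<beta>) * \<rho> ^ mdeg \<beta> \<le> M"
proof -
  define \<rho>' where "\<rho>' = (\<rho> + r) / 2"
  have \<rho>': "0 < \<rho>'" "\<rho>' < r" "\<rho> < \<rho>'" using assms by (auto simp: \<rho>'_def)
  obtain M where M: "\<And>\<alpha>. norm (a \<alpha>) * \<rho>' ^ mdeg \<alpha> \<le> M" using assms(1) \<rho>' unfolding psr_def by blast
  have M0: "0 \<le> M"
    by (rule order_trans[OF mult_nonneg_nonneg[OF norm_ge_zero zero_le_power[OF less_imp_le[OF \<rho>'(1)]]] M])
  define t where "t = \<rho> / \<rho>'"
  have t: "0 \<le> t" "t < 1" using assms \<rho>' by (auto simp: t_def)
  obtain C where C: "\<And>d::nat. real (d + 1) * t ^ d \<le> C" using lin_geom_bounded[OF t] by blast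
  show ?thesis
  proof (intro exI allI)
    fix \<beta> :: "'a \<Rightarrow> nat"
    define d where "d = mdeg \<beta>"
    have aup: "norm (a (\<beta>(k := Suc (\<beta> k)))) \<le> M / \<rho>' ^ Suc d"
      using M[of "\<beta>(k := Suc (\<beta> k))"] \<rho>' by (simp add: mdeg_up d_def field_simps del: power_Suc)
    have "norm (dcoef k a \<beta>) * \<rho> ^ mdeg \<beta> = real (Suc (\<beta> k)) * norm (a (\<beta>(k := Suc (\<beta> k)))) * \<rho> ^ d"
      by (simp add: dcoef_def norm_mult d_def del: of_nat_Suc)
    also have "\<dots> \<le> real (d + 1) * (M / \<rho>' ^ Suc d) * \<rho> ^ d"
      by (intro mult_right_mono mult_mono aup) (use le_mdeg[of \<beta> k] assms in \<open>auto simp: d_def\<close>)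
    also have "\<dots> = M / \<rho>' * (real (d + 1) * t ^ d)"
      using \<rho>' by (simp add: t_def power_divide field_simps)
    also have "\<dots> \<le> M / \<rho>' * C" by (intro mult_left_mono C) (use M0 \<rho>' in auto)
    finally show "norm (dcoef k a \<beta>) * \<rho> ^ mdeg \<beta> \<le> M / \<rho>' * C" .
  qed
qed


lemma psr_cpartial:
  fixes f :: "complex^'n::finite \<Rightarrow> complex"
  assumes "psr f p a r"
  shows "psr (cpartial k f) p (dcoef k a) r"
  unfolding psr_def
proof (intro conjI allI impI)
  show "0 < r" using assms by (simp add: psr_def)
  show "\<exists>M. \<forall>\<beta>. norm (dcoef k a \<beta>) * \<rho> ^ mdeg \<beta> \<le> M" if "0 < \<rho> \<and> \<rho> < r" for \<rho>
    using psr_dcoef_bound[OF assms] that by blast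
  fix h :: "complex^'n" assume h: "\<forall>i. norm (h$i) < r"
  define x where "x = p + h"
  have x: "x \<in> pdisc p r" using h by (simp add: pdisc_def x_def)
  obtain L where fL: "(f has_derivative L) (at x)" and lin: "\<And>c v. L (c *s v) = c * L v"
    and ax: "\<And>k. L (axis k 1) = pser (dcoef k a) (x - p)"
    using psr_deriv[OF assms x] by blast
  have d1: "((\<lambda>t. x + axis k t) has_derivative axis k) (at 0)"
    using has_derivative_add[OF has_derivative_const bounded_linear_imp_has_derivative[OF bounded_linear_axis]]
    by simp
  have xe: "x + axis k 0 = x" by (simp add: vec_eq_iff axis_def)
  have d2: "(f has_derivative L) (at (x + axis k 0))" unfolding xe by (rule fL)
  have "((\<lambda>t. f (x + axis k t)) has_derivative (\<lambda>t. L (axis k t))) (at 0)"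
    using has_derivative_compose[OF d1 d2] .
  moreover have "(\<lambda>t. L (axis k t)) = (*) (L (axis k 1))"
  proof
    fix t
    have "L (axis k t) = L (t *s axis k 1)" by (simp only: axis_scale[of k t, symmetric])
    also have "\<dots> = t * L (axis k 1)" by (rule lin)
    finally show "L (axis k t) = L (axis k 1) * t" by (simp add: mult.commute)
  qed
  ultimately have "((\<lambda>t. f (x + axis k t)) has_field_derivative L (axis k 1)) (at 0)"
    by (simp add: has_field_derivative_def)
  then have "cpartial k f x = L (axis k 1)" unfolding cpartial_def by (rule DERIV_imp_deriv)
  then show "cpartial k f (p + h) = pser (dcoef k a) h" using ax by (simp add: x_def)
qed

lemma psr_holo:
  assumes "psr f p a r"
  shows "holo_on (pdisc p r) f"
  unfolding holo_on_def using psr_deriv[OF assms] by blast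


fun dcoefs :: "'n::finite list \<Rightarrow> (('n \<Rightarrow> nat) \<Rightarrow> complex) \<Rightarrow> ('n \<Rightarrow> nat) \<Rightarrow> complex" where
  "dcoefs [] a = a"
| "dcoefs (k # ks) a = dcoef k (dcoefs ks a)"

lemma psr_cpartials:
  fixes f :: "complex^'n::finite \<Rightarrow> complex"
  assumes "psr f p a r"
  shows "psr (cpartials ks f) p (dcoefs ks a) r"
  by (induction ks) (auto intro: psr_cpartial assms)

lemma mnm_zero: "mnm \<alpha> (0::complex^'n::finite) = (if \<alpha> = (\<lambda>_. 0) then 1 else 0)"
proof (cases "\<alpha> = (\<lambda>_. 0)")
  case True then show ?thesis by (simp add: mnm_def)
next
  case False
  then obtain i where "\<alpha> i \<noteq> 0" by auto
  then have "(0::complex) ^ \<alpha> i = 0" by simp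
  then have "mnm \<alpha> (0::complex^'n) = 0" unfolding mnm_def by (intro prod_zero) auto
  then show ?thesis using False by simp
qed

lemma pser_zero: "pser b (0::complex^'n::finite) = b (\<lambda>_. 0)"
proof -
  have "pser b 0 = (\<Sum>\<^sub>\<infinity>\<alpha>\<in>{\<lambda>_. 0}. b \<alpha> * mnm \<alpha> (0::complex^'n))"
    unfolding pser_def by (rule infsum_cong_neutral) (auto simp: mnm_zero)
  also have "\<dots> = b (\<lambda>_. 0)" by (simp add: mnm_zero)
  finally show ?thesis .
qed

lemma psr_center: "psr f p a r \<Longrightarrow> f p = a (\<lambda>_. 0)"
  unfolding psr_def using pser_zero[of a] by (metis add.right_neutral norm_zero zero_index)

lemma count_list_Cons_if: "count_list (k # ks) i = (if i = k then Suc (count_list ks i) else count_list ks i)"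
  by auto

lemma dcoefs_formula:
  fixes a :: "('n::finite \<Rightarrow> nat) \<Rightarrow> complex"
  shows "dcoefs ks a \<alpha> = (\<Prod>i\<in>UNIV. of_nat (fact (\<alpha> i + count_list ks i)) / of_nat (fact (\<alpha> i))) *
      a (\<lambda>i. \<alpha> i + count_list ks i)"
proof (induction ks arbitrary: \<alpha>)
  case Nil
  then show ?case by simp
next
  case (Cons k ks)
  define \<alpha>' where "\<alpha>' = \<alpha>(k := Suc (\<alpha> k))"
  define c where "c = count_list ks"
  have e1: "(\<lambda>i. \<alpha>' i + c i) = (\<lambda>i. \<alpha> i + count_list (k # ks) i)"
    by (auto simp: \<alpha>'_def c_def fun_eq_iff)
  have pr: "of_nat (Suc (\<alpha> k)) * (\<Prod>i\<in>UNIV. of_nat (fact (\<alpha>' i + c i)) / of_nat (fact (\<alpha>' i)) :: complex)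
      = (\<Prod>i\<in>UNIV. of_nat (fact (\<alpha> i + count_list (k # ks) i)) / of_nat (fact (\<alpha> i)))"
  proof -
    have r1: "(\<Prod>i\<in>UNIV-{k}. of_nat (fact (\<alpha>' i + c i)) / of_nat (fact (\<alpha>' i)) :: complex)
        = (\<Prod>i\<in>UNIV-{k}. of_nat (fact (\<alpha> i + count_list (k # ks) i)) / of_nat (fact (\<alpha> i)))"
      by (rule prod.cong) (auto simp: \<alpha>'_def c_def)
    have r2: "of_nat (Suc (\<alpha> k)) * (of_nat (fact (\<alpha>' k + c k)) / of_nat (fact (\<alpha>' k)) :: complex)
        = of_nat (fact (\<alpha> k + count_list (k # ks) k)) / of_nat (fact (\<alpha> k))"
    proof -
      have "fact (\<alpha>' k) = (of_nat (Suc (\<alpha> k)) * fact (\<alpha> k) :: complex)" by (simp add: \<alpha>'_def)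
      moreover have "\<alpha>' k + c k = \<alpha> k + count_list (k # ks) k" by (simp add: \<alpha>'_def c_def)
      ultimately show ?thesis by (simp add: field_simps del: of_nat_Suc)
    qed
    have p1: "(\<Prod>i\<in>UNIV. of_nat (fact (\<alpha>' i + c i)) / of_nat (fact (\<alpha>' i)) :: complex)
      = (of_nat (fact (\<alpha>' k + c k)) / of_nat (fact (\<alpha>' k))) * (\<Prod>i\<in>UNIV-{k}. of_nat (fact (\<alpha>' i + c i)) / of_nat (fact (\<alpha>' i)))"
      by (rule prod.remove) auto
    have p2: "(\<Prod>i\<in>UNIV. of_nat (fact (\<alpha> i + count_list (k # ks) i)) / of_nat (fact (\<alpha> i)) :: complex)
      = (of_nat (fact (\<alpha> k + count_list (k # ks) k)) / of_nat (fact (\<alpha> k))) * (\<Prod>i\<in>UNIV-{k}. of_nat (fact (\<alpha> i + count_list (k # ks) i)) / of_nat (fact (\<alpha> i)))"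
      by (rule prod.remove) auto
    show ?thesis unfolding p1 p2 r1[symmetric] r2[symmetric] by (simp only: mult.assoc)
  qed
  have "dcoefs (k # ks) a \<alpha> = of_nat (Suc (\<alpha> k)) * dcoefs ks a \<alpha>'"
    by (simp add: dcoef_def \<alpha>'_def del: of_nat_Suc)
  also have "\<dots> = of_nat (Suc (\<alpha> k)) * ((\<Prod>i\<in>UNIV. of_nat (fact (\<alpha>' i + c i)) / of_nat (fact (\<alpha>' i))) *
      a (\<lambda>i. \<alpha>' i + c i))" by (simp add: Cons.IH c_def del: of_nat_Suc)
  also have "\<dots> = (\<Prod>i\<in>UNIV. of_nat (fact (\<alpha> i + count_list (k # ks) i)) / of_nat (fact (\<alpha> i))) *
      a (\<lambda>i. \<alpha> i + count_list (k # ks) i)"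
    by (simp only: e1 pr[symmetric] mult.assoc)
  finally show ?case .
qed

lemma count_concat_replicate:
  assumes "distinct xs"
  shows "count_list (concat (map (\<lambda>i. replicate (\<alpha> i) i) xs)) j = (if j \<in> set xs then \<alpha> j else 0)"
  using assms
proof (induction xs)
  case Nil then show ?case by simp
next
  case (Cons x xs)
  have cr: "count_list (replicate n x) j = (if x = j then n else 0)" for n by (induction n) auto
  show ?case using Cons by (auto simp: count_list_append cr)
qed

lemma mlist_count: "count_list (mlist (\<alpha>::'n::finite \<Rightarrow> nat)) i = \<alpha> i"
proof -
  obtain xs :: "'n list" where xs: "set xs = UNIV" "distinct xs" using finite_distinct_list[of "UNIV::'n set"] by auto
  have "\<exists>l. \<forall>i. count_list l i = \<alpha> i"
    by (rule exI[of _ "concat (map (\<lambda>i. replicate (\<alpha> i) i) xs)"]) (simp add: count_concat_replicate xs)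
  then show ?thesis unfolding mlist_def by (rule someI_ex[where P="\<lambda>l. \<forall>i. count_list l i = \<alpha> i", THEN spec])
qed

lemma psr_tcoef:
  fixes f :: "complex^'n::finite \<Rightarrow> complex"
  assumes "psr f p a r"
  shows "tcoef \<alpha> f p = a \<alpha>"
proof -
  have "cpartials (mlist \<alpha>) f p = dcoefs (mlist \<alpha>) a (\<lambda>_. 0)"
    by (rule psr_center[OF psr_cpartials[OF assms]])
  also have "\<dots> = (\<Prod>i\<in>UNIV. of_nat (fact (\<alpha> i))) * a \<alpha>"
    by (simp add: dcoefs_formula mlist_count)
  finally show ?thesis unfolding tcoef_def by simp
qed

lemma psr_cpartials_at:
  fixes f :: "complex^'n::finite \<Rightarrow> complex"
  assumes "psr f p a r" "\<And>i. norm (h$i) < r"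
  shows "cpartials ks f (p + h) = pser (dcoefs ks a) h"
  using psr_cpartials[OF assms(1), of ks] assms(2) unfolding psr_def by blast


definition vupd :: "complex^'n::finite \<Rightarrow> 'n \<Rightarrow> complex \<Rightarrow> complex^'n" where
  "vupd x i w = (\<chi> j. if j = i then w else x$j)"

lemma vupd_nth [simp]: "(vupd x i w)$j = (if j = i then w else x$j)"
  by (simp add: vupd_def)

lemma vupd_same [simp]: "vupd (vupd x k w') k w = vupd x k w"
  by (simp add: vec_eq_iff)

lemma vupd_comm: "i \<noteq> k \<Longrightarrow> vupd (vupd x i u) k w = vupd (vupd x k w) i u"
  by (simp add: vec_eq_iff)

lemma vupd_self [simp]: "vupd x k (x$k) = x"
  by (simp add: vec_eq_iff)

lemma continuous_on_vupd:
  fixes X :: "'a::topological_space \<Rightarrow> complex^'n::finite"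
  assumes "continuous_on S X" "continuous_on S W"
  shows "continuous_on S (\<lambda>z. vupd (X z) k (W z))"
  unfolding vupd_def
proof (intro continuous_on_vec_lambda)
  fix j
  show "continuous_on S (\<lambda>z. if j = k then W z else X z $ j)"
    by (cases "j = k") (auto intro: continuous_on_component assms)
qed

definition cd :: "complex^'n::finite \<Rightarrow> real \<Rightarrow> (complex^'n) set" where
  "cd p R = {x. \<forall>i. norm (x$i - p$i) \<le> R}"

lemma compact_cd: "compact (cd (p::complex^'n::finite) R)"
proof -
  have "cd p R = (\<Inter>i\<in>UNIV. {x. norm (x$i - p$i) \<le> R})" by (auto simp: cd_def)
  moreover have "closed {x::complex^'n. norm (x$i - p$i) \<le> R}" for i
    by (intro closed_Collect_le continuous_intros continuous_on_component continuous_on_id)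
  ultimately have cl: "closed (cd p R)" by auto
  have "cd p R \<subseteq> cball p (real CARD('n) * R)"
  proof
    fix x assume x: "x \<in> cd p R"
    have "norm (x - p) \<le> (\<Sum>i\<in>UNIV. norm ((x - p)$i))" unfolding norm_vec_def by (rule L2_set_le_sum) auto
    also have "\<dots> \<le> (\<Sum>i\<in>(UNIV::'n set). R)" by (intro sum_mono) (use x in \<open>auto simp: cd_def\<close>)
    finally show "x \<in> cball p (real CARD('n) * R)" by (simp add: dist_norm norm_minus_commute)
  qed
  then have "bounded (cd p R)" using bounded_cball bounded_subset by blast
  with cl show ?thesis by (simp add: compact_eq_bounded_closed)
qed

lemma vupd_in_cd: "x \<in> cd p R \<Longrightarrow> norm (w - p$k) \<le> R \<Longrightarrow> vupd x k w \<in> cd p R"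
  by (auto simp: cd_def)

lemma center_in_cd: "0 \<le> R \<Longrightarrow> p \<in> cd p R"
  by (auto simp: cd_def)

lemma param_cint_cont:
  fixes \<Phi> :: "'a::metric_space \<Rightarrow> complex \<Rightarrow> complex"
  assumes K: "compact K" and R: "0 < R"
    and cont: "continuous_on (K \<times> sphere c R) (\<lambda>z. \<Phi> (fst z) (snd z))"
  shows "continuous_on K (\<lambda>x. contour_integral (circlepath c R) (\<Phi> x))"
proof -
  have uc: "uniformly_continuous_on (K \<times> sphere c R) (\<lambda>z. \<Phi> (fst z) (snd z))"
    by (rule compact_uniformly_continuous[OF cont]) (intro compact_Times K compact_sphere)
  have cx: "continuous_on (sphere c R) (\<Phi> x)" if "x \<in> K" for x
  proof -
    have "continuous_on (sphere c R) (\<lambda>w. (\<lambda>z. \<Phi> (fst z) (snd z)) (x, w))"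
      by (rule continuous_on_compose2[OF cont]) (auto intro!: continuous_intros simp: that)
    then show ?thesis by simp
  qed
  have int: "\<Phi> x contour_integrable_on circlepath c R" if "x \<in> K" for x
    by (rule contour_integrable_continuous_circlepath) (use cx[OF that] R in simp)
  show ?thesis
    unfolding continuous_on_iff
  proof (intro ballI allI impI)
    fix x e assume x: "x \<in> K" and e: "(0::real) < e"
    define e' where "e' = e / (4 * pi * R)"
    have e': "0 < e'" using e R by (simp add: e'_def)
    obtain d where d: "d > 0" and dd: "\<And>z z'. z \<in> K \<times> sphere c R \<Longrightarrow> z' \<in> K \<times> sphere c R \<Longrightarrow>
        dist z' z < d \<Longrightarrow> dist (\<Phi> (fst z') (snd z')) (\<Phi> (fst z) (snd z)) < e'"
      using uc e' unfolding uniformly_continuous_on_def by metis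
    show "\<exists>d>0. \<forall>x'\<in>K. dist x' x < d \<longrightarrow> dist (contour_integral (circlepath c R) (\<Phi> x')) (contour_integral (circlepath c R) (\<Phi> x)) < e"
    proof (intro exI conjI ballI impI)
      show "d > 0" by (rule d)
      fix x' assume x': "x' \<in> K" and dx: "dist x' x < d"
      have "((\<lambda>w. \<Phi> x' w - \<Phi> x w) has_contour_integral
          (contour_integral (circlepath c R) (\<Phi> x') - contour_integral (circlepath c R) (\<Phi> x))) (circlepath c R)"
        by (intro has_contour_integral_diff has_contour_integral_integral int x x')
      then have "norm (contour_integral (circlepath c R) (\<Phi> x') - contour_integral (circlepath c R) (\<Phi> x)) \<le> e' * (2 * pi * R)"
      proof (rule has_contour_integral_bound_circlepath)
        fix w assume "norm (w - c) = R"
        then have w: "w \<in> sphere c R" by (simp add: dist_norm norm_minus_commute)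
        have "dist (x', w) (x, w) < d" using dx by (simp add: dist_Pair_Pair)
        then have "dist (\<Phi> x' w) (\<Phi> x w) < e'" using dd[of "(x, w)" "(x', w)"] x x' w by auto
        then show "norm (\<Phi> x' w - \<Phi> x w) \<le> e'" by (simp add: dist_norm)
      qed (use e' R in auto)
      also have "e' * (2 * pi * R) = e / 2" using R by (simp add: e'_def field_simps)
      finally show "dist (contour_integral (circlepath c R) (\<Phi> x')) (contour_integral (circlepath c R) (\<Phi> x)) < e"
        using e by (simp add: dist_norm)
    qed
  qed
qed


definition osg_hyp :: "(complex^'n::finite \<Rightarrow> complex) \<Rightarrow> complex^'n \<Rightarrow> real \<Rightarrow> real \<Rightarrow> 'n set \<Rightarrow> bool" where
  "osg_hyp f p R M S \<longleftrightarrow> continuous_on (cd p R) f \<and> (\<forall>x\<in>cd p R. norm (f x) \<le> M) \<and>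
     (\<forall>i\<in>S. \<forall>x\<in>cd p R. (\<lambda>w. f (vupd x i w)) holomorphic_on ball (p$i) R)"

definition cint :: "(complex^'n::finite \<Rightarrow> complex) \<Rightarrow> complex^'n \<Rightarrow> real \<Rightarrow> 'n \<Rightarrow> nat \<Rightarrow> complex^'n \<Rightarrow> complex" where
  "cint f p R k j x = contour_integral (circlepath (p$k) R) (\<lambda>w. f (vupd x k w) / (w - p$k) ^ Suc j)"

lemma slice_cont:
  assumes "continuous_on (cd p R) f" "x \<in> cd p R"
  shows "continuous_on (cball (p$k) R) (\<lambda>w. f (vupd x k w))"
proof (rule continuous_on_compose2[OF assms(1)])
  show "continuous_on (cball (p$k) R) (\<lambda>w. vupd x k w)" by (intro continuous_on_vupd continuous_intros)
  show "(\<lambda>w. vupd x k w) ` cball (p$k) R \<subseteq> cd p R"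
    using assms(2) by (auto intro!: vupd_in_cd simp: dist_norm norm_minus_commute)
qed

lemma cint_integrable:
  assumes "continuous_on (cd p R) f" "x \<in> cd p R" "0 < R"
  shows "(\<lambda>w. f (vupd x k w) / (w - p$k) ^ Suc j) contour_integrable_on circlepath (p$k) R"
proof (rule contour_integrable_continuous_circlepath)
  have "continuous_on (sphere (p$k) R) (\<lambda>w. f (vupd x k w))"
    using slice_cont[OF assms(1,2), of k] by (rule continuous_on_subset) auto
  then show "continuous_on (path_image (circlepath (p $ k) R)) (\<lambda>w. f (vupd x k w) / (w - p $ k) ^ Suc j)"
    using assms(3) by (auto intro!: continuous_intros)
qed

lemma cint_vupd [simp]: "cint f p R k j (vupd x k w) = cint f p R k j x"
  by (simp add: cint_def)

lemma cint_cont: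
  assumes "continuous_on (cd p R) f" "0 < R"
  shows "continuous_on (cd p R) (cint f p R k j)"
  unfolding cint_def[abs_def]
proof (rule param_cint_cont[OF compact_cd assms(2)])
  have c1: "continuous_on (cd p R \<times> sphere (p$k) R) (\<lambda>z. f (vupd (fst z) k (snd z)))"
  proof (rule continuous_on_compose2[OF assms(1)])
    show "continuous_on (cd p R \<times> sphere (p$k) R) (\<lambda>z. vupd (fst z) k (snd z))"
      by (intro continuous_on_vupd continuous_intros)
    show "(\<lambda>z. vupd (fst z) k (snd z)) ` (cd p R \<times> sphere (p$k) R) \<subseteq> cd p R"
      by (auto intro!: vupd_in_cd simp: dist_norm norm_minus_commute)
  qed
  show "continuous_on (cd p R \<times> sphere (p$k) R) (\<lambda>z. f (vupd (fst z) k (snd z)) / (snd z - p$k) ^ Suc j)"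
    using assms(2) by (auto intro!: continuous_intros c1)
qed

lemma cint_bound:
  assumes "osg_hyp f p R M S" "0 < R" "x \<in> cd p R"
  shows "norm (cint f p R k j x) \<le> M / R ^ j * (2 * pi)"
proof -
  have hc: "continuous_on (cd p R) f" and hM: "\<And>y. y \<in> cd p R \<Longrightarrow> norm (f y) \<le> M"
    using assms(1) by (auto simp: osg_hyp_def)
  have M0: "0 \<le> M" using hM[OF assms(3)] norm_ge_zero order_trans by blast
  have "norm (cint f p R k j x) \<le> M / R ^ Suc j * (2 * pi * R)"
    unfolding cint_def
  proof (rule has_contour_integral_bound_circlepath[OF has_contour_integral_integral[OF cint_integrable[OF hc assms(3,2)]]])
    fix w assume w: "norm (w - p$k) = R"
    have "norm (f (vupd x k w)) \<le> M" by (rule hM) (use assms(3) w in \<open>auto intro: vupd_in_cd\<close>)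
    then show "norm (f (vupd x k w) / (w - p$k) ^ Suc j) \<le> M / R ^ Suc j"
    proof -
      have "norm (f (vupd x k w) / (w - p$k) ^ Suc j) = norm (f (vupd x k w)) / R ^ Suc j"
        using w by (simp add: norm_divide norm_power del: power_Suc)
      also have "\<dots> \<le> M / R ^ Suc j" by (rule divide_right_mono) (use \<open>norm (f (vupd x k w)) \<le> M\<close> assms(2) in auto)
      finally show ?thesis .
    qed
  qed (use M0 assms(2) in auto)
  also have "\<dots> = M / R ^ j * (2 * pi)" using assms(2) by (simp add: field_simps)
  finally show ?thesis .
qed

lemma taylor_k:
  assumes "osg_hyp f p R M S" "k \<in> S" "0 < R" "x \<in> cd p R" "norm (x$k - p$k) < R"
  shows "(\<lambda>n. cint f p R k n x / (2 * pi * \<i>) * (x$k - p$k) ^ n) sums f x"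
proof -
  define g where "g w = f (vupd x k w)" for w
  have hc: "continuous_on (cd p R) f" using assms(1) by (auto simp: osg_hyp_def)
  have holg: "g holomorphic_on ball (p$k) R" using assms(1,2,4) by (auto simp: osg_hyp_def g_def[abs_def])
  have contg: "continuous_on (cball (p$k) R) g" unfolding g_def[abs_def] by (rule slice_cont[OF hc assms(4)])
  have xk: "x$k \<in> ball (p$k) R" using assms(5) by (simp add: dist_norm norm_minus_commute)
  have pk: "p$k \<in> ball (p$k) R" using assms(3) by simp
  have "(\<lambda>n. (deriv ^^ n) g (p$k) / fact n * (x$k - p$k) ^ n) sums g (x$k)"
    by (rule holomorphic_power_series[OF holg xk])
  moreover have "(deriv ^^ n) g (p$k) / fact n = cint f p R k n x / (2 * pi * \<i>)" for n
  proof -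
    have "(deriv ^^ n) g (p$k) = fact n / (2 * pi * \<i>) * contour_integral (circlepath (p$k) R) (\<lambda>u. g u / (u - p$k) ^ Suc n)"
      by (rule Cauchy_higher_derivative_integral_circlepath(2)[OF contg holg pk])
    then show ?thesis by (simp add: cint_def g_def)
  qed
  ultimately show ?thesis by (simp add: g_def)
qed


lemma vdc_circlepath: "continuous_on {0..1} (\<lambda>t. vector_derivative (circlepath c r) (at t))"
  by (simp add: vector_derivative_circlepath continuous_intros)

lemma holo_cint:
  assumes hyp: "osg_hyp f p R M S" and i: "i \<in> S" "i \<noteq> k" and R: "0 < R" and x: "x \<in> cd p R"
  shows "(\<lambda>u. cint f p R k j (vupd x i u)) holomorphic_on ball (p$i) R"
proof -
  have hc: "continuous_on (cd p R) f" using hyp by (simp add: osg_hyp_def)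
  have hol: "\<And>y. y \<in> cd p R \<Longrightarrow> (\<lambda>w. f (vupd y i w)) holomorphic_on ball (p$i) R"
    using hyp i by (auto simp: osg_hyp_def)
  define G where "G u = cint f p R k j (vupd x i u)" for u
  have inS: "vupd x i u \<in> cd p R" if "u \<in> cball (p$i) R" for u
    using that x by (auto intro!: vupd_in_cd simp: dist_norm norm_minus_commute)
  have contG: "continuous_on (cball (p$i) R) G"
    unfolding G_def[abs_def]
  proof (rule continuous_on_compose2[OF cint_cont[OF hc R]])
    show "continuous_on (cball (p$i) R) (\<lambda>u. vupd x i u)" by (intro continuous_on_vupd continuous_intros)
  qed (use inS in auto)
  have contGs: "continuous_on (sphere (p$i) R) G" by (rule continuous_on_subset[OF contG]) auto
  have key: "((\<lambda>u. G u / (u - z) ^ 1) has_contour_integral (2 * pi * \<i> * G z)) (circlepath (p$i) R)"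
    if z: "z \<in> ball (p$i) R" for z
  proof -
    define \<Phi> where "\<Phi> u w = f (vupd (vupd x i u) k w) / (w - p$k) ^ Suc j / (u - z)" for u w
    have zns: "u - z \<noteq> 0" if "u \<in> sphere (p$i) R" for u using that z by (auto simp: dist_norm)
    have int1: "(\<lambda>u. G u / (u - z)) contour_integrable_on circlepath (p$i) R"
      by (rule contour_integrable_continuous_circlepath) (use R zns in \<open>auto intro!: continuous_intros contGs\<close>)
    have e1: "contour_integral (circlepath (p$i) R) (\<lambda>u. G u / (u - z)) =
        contour_integral (circlepath (p$i) R) (\<lambda>u. contour_integral (circlepath (p$k) R) (\<Phi> u))"
    proof (rule contour_integral_eq)
      fix u assume u: "u \<in> path_image (circlepath (p$i) R)"
      then have "vupd x i u \<in> cd p R" using R by (intro inS) auto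
      then show "G u / (u - z) = contour_integral (circlepath (p$k) R) (\<Phi> u)"
        unfolding G_def cint_def \<Phi>_def by (rule contour_integral_div[OF cint_integrable[OF hc _ R], symmetric])
    qed
    have e2: "contour_integral (circlepath (p$i) R) (\<lambda>u. contour_integral (circlepath (p$k) R) (\<Phi> u)) =
        contour_integral (circlepath (p$k) R) (\<lambda>w. contour_integral (circlepath (p$i) R) (\<lambda>u. \<Phi> u w))"
    proof (rule contour_integral_swap)
      have c1: "continuous_on (sphere (p$i) R \<times> sphere (p$k) R) (\<lambda>y. f (vupd (vupd x i (fst y)) k (snd y)))"
      proof (rule continuous_on_compose2[OF hc])
        show "continuous_on (sphere (p$i) R \<times> sphere (p$k) R) (\<lambda>y. vupd (vupd x i (fst y)) k (snd y))"
          by (intro continuous_on_vupd continuous_intros)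
        show "(\<lambda>y. vupd (vupd x i (fst y)) k (snd y)) ` (sphere (p$i) R \<times> sphere (p$k) R) \<subseteq> cd p R"
          using x by (auto intro!: vupd_in_cd simp: dist_norm norm_minus_commute)
      qed
      have "continuous_on (sphere (p$i) R \<times> sphere (p$k) R) (\<lambda>y. \<Phi> (fst y) (snd y))"
        unfolding \<Phi>_def using R zns by (auto intro!: continuous_intros c1)
      then show "continuous_on (path_image (circlepath (p$i) R) \<times> path_image (circlepath (p$k) R)) (\<lambda>(y1, y2). \<Phi> y1 y2)"
        using R by (simp add: case_prod_unfold)
    qed (auto intro: vdc_circlepath)
    have e3: "contour_integral (circlepath (p$i) R) (\<lambda>u. \<Phi> u w) = 2 * pi * \<i> * (f (vupd (vupd x i z) k w) / (w - p$k) ^ Suc j)"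
      if w: "w \<in> path_image (circlepath (p$k) R)" for w
    proof -
      define y where "y = vupd x k w"
      have y: "y \<in> cd p R" unfolding y_def using w x R by (auto intro!: vupd_in_cd simp: dist_norm norm_minus_commute)
      have "((\<lambda>u. f (vupd y i u) / (u - z)) has_contour_integral (2 * of_real pi * \<i> * f (vupd y i z))) (circlepath (p$i) R)"
        by (rule Cauchy_integral_circlepath[OF slice_cont[OF hc y] hol[OF y]]) (use z in \<open>simp add: dist_norm norm_minus_commute\<close>)
      then have "((\<lambda>u. f (vupd y i u) / (u - z) / (w - p$k) ^ Suc j) has_contour_integral
          (2 * of_real pi * \<i> * f (vupd y i z) / (w - p$k) ^ Suc j)) (circlepath (p$i) R)"
        by (rule has_contour_integral_div)
      moreover have "\<Phi> u w = f (vupd y i u) / (u - z) / (w - p$k) ^ Suc j" for u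
        unfolding \<Phi>_def y_def using vupd_comm[OF i(2), of x u w] by simp
      moreover have "vupd y i z = vupd (vupd x i z) k w" unfolding y_def using vupd_comm[OF i(2)] by simp
      ultimately show ?thesis by (simp add: contour_integral_unique)
    qed
    have e4: "contour_integral (circlepath (p$k) R) (\<lambda>w. contour_integral (circlepath (p$i) R) (\<lambda>u. \<Phi> u w)) =
        2 * pi * \<i> * G z"
    proof -
      have "contour_integral (circlepath (p$k) R) (\<lambda>w. contour_integral (circlepath (p$i) R) (\<lambda>u. \<Phi> u w)) =
          contour_integral (circlepath (p$k) R) (\<lambda>w. 2 * pi * \<i> * (f (vupd (vupd x i z) k w) / (w - p$k) ^ Suc j))"
        by (rule contour_integral_eq) (rule e3)
      also have "\<dots> = 2 * pi * \<i> * G z"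
        unfolding G_def cint_def
        by (rule contour_integral_lmul[OF cint_integrable[OF hc inS R]]) (use z in auto)
      finally show ?thesis .
    qed
    have "contour_integral (circlepath (p$i) R) (\<lambda>u. G u / (u - z)) = 2 * pi * \<i> * G z"
      using e1 e2 e4 by simp
    then show ?thesis using has_contour_integral_integral[OF int1] by simp
  qed
  have "(\<lambda>w. 2 * pi * \<i> * G w) holomorphic_on ball (p$i) R"
  proof (subst holomorphic_on_open[OF open_ball], intro ballI exI)
    fix w assume w: "w \<in> ball (p$i) R"
    show "((\<lambda>w. 2 * pi * \<i> * G w) has_field_derivative
        (of_nat 1 * contour_integral (circlepath (p$i) R) (\<lambda>u. G u / (u - w) ^ Suc 1))) (at w)"
      by (rule Cauchy_next_derivative_circlepath(2)[where f=G and z="p$i" and r=R and k=1 and g="\<lambda>w. 2 * pi * \<i> * G w", OF _ key _ w])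
        (use contGs R in auto)
  qed
  then have "(\<lambda>w. (2 * pi * \<i> * G w) / (2 * pi * \<i>)) holomorphic_on ball (p$i) R"
    by (rule holomorphic_on_divide[OF _ holomorphic_on_const]) auto
  then show ?thesis by (simp add: G_def[abs_def])
qed


definition osg_concl :: "(complex^'n::finite \<Rightarrow> complex) \<Rightarrow> complex^'n \<Rightarrow> real \<Rightarrow> real \<Rightarrow> 'n set \<Rightarrow> bool" where
  "osg_concl f p R M S \<longleftrightarrow> (\<exists>a. (\<forall>\<alpha>. norm (a \<alpha>) * R ^ mdeg \<alpha> \<le> M) \<and>
     (\<forall>h. (\<forall>i. i \<notin> S \<longrightarrow> h$i = 0) \<longrightarrow> (\<forall>i. norm (h$i) < R) \<longrightarrow> f (p + h) = pser a h))"

lemma hyp_b: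
  assumes hyp: "osg_hyp f p R M (insert k S)" and k: "k \<notin> S" and R: "0 < R"
  shows "osg_hyp (\<lambda>x. cint f p R k j x / (2 * pi * \<i>)) p R (M / R ^ j) S"
  unfolding osg_hyp_def
proof (intro conjI ballI)
  have hc: "continuous_on (cd p R) f" using hyp by (simp add: osg_hyp_def)
  show "continuous_on (cd p R) (\<lambda>x. cint f p R k j x / (2 * pi * \<i>))"
    by (intro continuous_intros cint_cont[OF hc R]) auto
  fix x assume x: "x \<in> cd p R"
  have "norm (cint f p R k j x) \<le> M / R ^ j * (2 * pi)" by (rule cint_bound[OF hyp R x])
  then show "norm (cint f p R k j x / (2 * pi * \<i>)) \<le> M / R ^ j"
    by (simp add: norm_divide norm_mult field_simps)
next
  fix i x assume i: "i \<in> S" and x: "x \<in> cd p R"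
  have "(\<lambda>u. cint f p R k j (vupd x i u)) holomorphic_on ball (p$i) R"
    by (rule holo_cint[OF hyp _ _ R x]) (use i k in auto)
  then show "(\<lambda>w. cint f p R k j (vupd x i w) / (2 * pi * \<i>)) holomorphic_on ball (p$i) R"
    by (rule holomorphic_on_divide[OF _ holomorphic_on_const]) auto
qed

lemma mnm_split:
  fixes h :: "complex^'n::finite"
  shows "mnm \<alpha> h = mnm (\<alpha>(k := 0)) (vupd h k 0) * (h$k) ^ (\<alpha> k)"
proof -
  have "mnm \<alpha> h = (h$k) ^ (\<alpha> k) * (\<Prod>j\<in>UNIV-{k}. (h$j) ^ (\<alpha> j))"
    unfolding mnm_def by (rule prod.remove) auto
  moreover have "mnm (\<alpha>(k := 0)) (vupd h k 0) = (\<Prod>j\<in>UNIV-{k}. (h$j) ^ (\<alpha> j))"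
  proof -
    have "mnm (\<alpha>(k := 0)) (vupd h k 0) = ((vupd h k 0)$k) ^ ((\<alpha>(k := 0)) k) *
        (\<Prod>j\<in>UNIV-{k}. ((vupd h k 0)$j) ^ ((\<alpha>(k := 0)) j))"
      unfolding mnm_def by (rule prod.remove) auto
    also have "(\<Prod>j\<in>UNIV-{k}. ((vupd h k 0)$j) ^ ((\<alpha>(k := 0)) j)) = (\<Prod>j\<in>UNIV-{k}. (h$j) ^ (\<alpha> j))"
      by (rule prod.cong) auto
    also have "((vupd h k 0)$k) ^ ((\<alpha>(k := 0)) k) = 1" by simp
    finally show ?thesis by (simp only: mult_1_left)
  qed
  ultimately show ?thesis by (simp add: mult.commute)
qed

lemma mdeg_split: "mdeg \<alpha> = \<alpha> k + mdeg (\<alpha>(k := 0))"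
proof -
  have "mdeg \<alpha> = \<alpha> k + (\<Sum>j\<in>UNIV-{k}. \<alpha> j)" unfolding mdeg_def by (rule sum.remove) auto
  moreover have "mdeg (\<alpha>(k := 0)) = (\<Sum>j\<in>UNIV-{k}. \<alpha> j)"
  proof -
    have "mdeg (\<alpha>(k := 0)) = (\<alpha>(k := 0)) k + (\<Sum>j\<in>UNIV-{k}. (\<alpha>(k := 0)) j)" unfolding mdeg_def by (rule sum.remove) auto
    also have "(\<Sum>j\<in>UNIV-{k}. (\<alpha>(k := 0)) j) = (\<Sum>j\<in>UNIV-{k}. \<alpha> j)" by (rule sum.cong) auto
    also have "(\<alpha>(k := 0)) k = 0" by simp
    finally show ?thesis by (simp only: add_0)
  qed
  ultimately show ?thesis by simp
qed

lemma mnm_zero_coord: "h$k = 0 \<Longrightarrow> \<beta> k \<noteq> 0 \<Longrightarrow> mnm \<beta> h = 0"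
  unfolding mnm_def by (rule prod_zero) (auto intro: bexI[of _ k])

lemma max_coord:
  fixes h :: "complex^'n::finite"
  assumes "\<And>i. norm (h$i) < R"
  shows "\<exists>\<rho>'. 0 \<le> \<rho>' \<and> \<rho>' < R \<and> (\<forall>i. norm (h$i) \<le> \<rho>')"
proof (intro exI conjI allI)
  show "Max (range (\<lambda>i. norm (h$i))) < R" using assms by (subst Max_less_iff) auto
  show "norm (h$i) \<le> Max (range (\<lambda>i. norm (h$i)))" for i by (rule Max_ge) auto
  then show "0 \<le> Max (range (\<lambda>i. norm (h$i)))" using norm_ge_zero order_trans by blast
qed

lemma osg_step:
  fixes f :: "complex^'n::finite \<Rightarrow> complex"
  assumes IH: "\<And>g M'. osg_hyp g p R M' S \<Longrightarrow> osg_concl g p R M' S"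
    and k: "k \<notin> S" and R: "0 < R" and hyp: "osg_hyp f p R M (insert k S)"
  shows "osg_concl f p R M (insert k S)"
proof -
  define b where "b j x = cint f p R k j x / (2 * pi * \<i>)" for j x
  have "\<forall>j. \<exists>A. (\<forall>\<beta>. norm (A \<beta>) * R ^ mdeg \<beta> \<le> M / R ^ j) \<and>
      (\<forall>h. (\<forall>i. i \<notin> S \<longrightarrow> h$i = 0) \<longrightarrow> (\<forall>i. norm (h$i) < R) \<longrightarrow> b j (p + h) = pser A h)"
  proof
    fix j
    have "osg_hyp (b j) p R (M / R ^ j) S" unfolding b_def by (rule hyp_b[OF hyp k R])
    then show "\<exists>A. (\<forall>\<beta>. norm (A \<beta>) * R ^ mdeg \<beta> \<le> M / R ^ j) \<and>
      (\<forall>h. (\<forall>i. i \<notin> S \<longrightarrow> h$i = 0) \<longrightarrow> (\<forall>i. norm (h$i) < R) \<longrightarrow> b j (p + h) = pser A h)"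
      using IH unfolding osg_concl_def by blast
  qed
  then obtain A where Ab: "\<And>j \<beta>. norm (A j \<beta>) * R ^ mdeg \<beta> \<le> M / R ^ j"
    and Ae: "\<And>j h. (\<forall>i. i \<notin> S \<longrightarrow> h$i = 0) \<Longrightarrow> (\<forall>i. norm (h$i) < R) \<Longrightarrow> b j (p + h) = pser (A j) h"
    by metis
  define a where "a \<alpha> = A (\<alpha> k) (\<alpha>(k := 0))" for \<alpha>
  have abound: "norm (a \<alpha>) * R ^ mdeg \<alpha> \<le> M" for \<alpha>
  proof -
    have "norm (a \<alpha>) * R ^ mdeg \<alpha> = (norm (A (\<alpha> k) (\<alpha>(k := 0))) * R ^ mdeg (\<alpha>(k := 0))) * R ^ (\<alpha> k)"
      unfolding a_def by (subst mdeg_split[of \<alpha> k]) (simp add: power_add)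
    also have "\<dots> \<le> M / R ^ (\<alpha> k) * R ^ (\<alpha> k)" by (intro mult_right_mono Ab) (use R in auto)
    also have "\<dots> = M" using R by simp
    finally show ?thesis .
  qed
  show ?thesis
    unfolding osg_concl_def
  proof (intro exI conjI allI impI)
    show "norm (a \<alpha>) * R ^ mdeg \<alpha> \<le> M" for \<alpha> by (rule abound)
    fix h :: "complex^'n" assume hs: "\<forall>i. i \<notin> insert k S \<longrightarrow> h$i = 0" and hR: "\<forall>i. norm (h$i) < R"
    define h' where "h' = vupd h k 0"
    have h's: "\<forall>i. i \<notin> S \<longrightarrow> h'$i = 0" using hs by (auto simp: h'_def)
    have h'R: "\<forall>i. norm (h'$i) < R" using hR R by (auto simp: h'_def)
    have x: "p + h \<in> cd p R" using hR by (auto simp: cd_def less_imp_le)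
    have "(\<lambda>n. b n (p + h) * ((p + h)$k - p$k) ^ n) sums f (p + h)"
      unfolding b_def by (rule taylor_k[OF hyp _ R x]) (use hR in auto)
    moreover have "b n (p + h) = pser (A n) h'" for n
    proof -
      have "p + h' = vupd (p + h) k (p$k)" by (simp add: h'_def vec_eq_iff)
      then have "b n (p + h) = b n (p + h')" by (simp add: b_def)
      also have "\<dots> = pser (A n) h'" by (rule Ae[OF h's h'R])
      finally show ?thesis .
    qed
    ultimately have tay: "(\<lambda>n. pser (A n) h' * (h$k) ^ n) sums f (p + h)" by simp
    obtain \<rho>' where \<rho>': "0 \<le> \<rho>'" "\<rho>' < R" "\<And>i. norm (h$i) \<le> \<rho>'" using max_coord[of h R] hR by blast
    have sumh: "(\<lambda>\<alpha>. a \<alpha> * mnm \<alpha> h) summable_on UNIV"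
      by (rule pser_summable[OF abound R \<rho>'(3) \<rho>'(2)])
    define T where "T = (Sigma (UNIV::nat set) (\<lambda>_. {\<beta>::'n \<Rightarrow> nat. \<beta> k = 0}))"
    define G where "G z = A (fst z) (snd z) * mnm (snd z) h' * (h$k) ^ (fst z)" for z
    have bij1: "\<And>\<alpha>. \<alpha> \<in> UNIV \<Longrightarrow> (\<lambda>(n, \<beta>). \<beta>(k := n)) ((\<lambda>\<alpha>. (\<alpha> k, \<alpha>(k := 0))) \<alpha>) = \<alpha>" by auto
    have bij2: "\<And>\<alpha>. \<alpha> \<in> UNIV \<Longrightarrow> (\<lambda>\<alpha>. (\<alpha> k, \<alpha>(k := 0))) \<alpha> \<in> T" by (auto simp: T_def)
    have bij3: "\<And>z. z \<in> T \<Longrightarrow> (\<lambda>\<alpha>. (\<alpha> k, \<alpha>(k := 0))) ((\<lambda>(n, \<beta>). \<beta>(k := n)) z) = z"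
      by (auto simp: T_def fun_eq_iff)
    have bij4: "\<And>z. z \<in> T \<Longrightarrow> (\<lambda>(n, \<beta>). \<beta>(k := n)) z \<in> UNIV" by auto
    have bij5: "\<And>\<alpha>. \<alpha> \<in> UNIV \<Longrightarrow> G ((\<lambda>\<alpha>. (\<alpha> k, \<alpha>(k := 0))) \<alpha>) = a \<alpha> * mnm \<alpha> h"
      by (simp add: G_def a_def h'_def mnm_split[of _ h k])
    have eqv: "(\<lambda>\<alpha>. a \<alpha> * mnm \<alpha> h) summable_on UNIV \<longleftrightarrow> G summable_on T"
      by (rule summable_on_reindex_bij_witness[where i="\<lambda>(n,\<beta>). \<beta>(k:=n)" and j="\<lambda>\<alpha>. (\<alpha> k, \<alpha>(k:=0))"])
        (use bij1 bij2 bij3 bij4 bij5 in auto)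
    have sumG: "G summable_on T" using eqv sumh by simp
    have eqG: "pser a h = infsum G T"
      unfolding pser_def
      by (rule infsum_reindex_bij_witness[where i="\<lambda>(n,\<beta>). \<beta>(k:=n)" and j="\<lambda>\<alpha>. (\<alpha> k, \<alpha>(k:=0))"])
        (use bij1 bij2 bij3 bij4 bij5 in auto)
    have inner: "(\<Sum>\<^sub>\<infinity>\<beta>\<in>{\<beta>. \<beta> k = 0}. G (n, \<beta>)) = pser (A n) h' * (h$k) ^ n" for n
    proof -
      have "(\<Sum>\<^sub>\<infinity>\<beta>\<in>{\<beta>. \<beta> k = 0}. G (n, \<beta>)) = (\<Sum>\<^sub>\<infinity>\<beta>\<in>{\<beta>. \<beta> k = 0}. A n \<beta> * mnm \<beta> h') * (h$k) ^ n"
        unfolding G_def by (simp add: infsum_cmult_left')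
      also have "(\<Sum>\<^sub>\<infinity>\<beta>\<in>{\<beta>. \<beta> k = 0}. A n \<beta> * mnm \<beta> h') = pser (A n) h'"
        unfolding pser_def by (rule infsum_cong_neutral) (use mnm_zero_coord[of "vupd h k 0" k] in \<open>auto simp: h'_def\<close>)
      finally show ?thesis .
    qed
    have "infsum G T = (\<Sum>\<^sub>\<infinity>n. \<Sum>\<^sub>\<infinity>\<beta>\<in>{\<beta>. \<beta> k = 0}. G (n, \<beta>))"
      unfolding T_def by (rule infsum_Sigma_banach[symmetric]) (use sumG in \<open>simp add: T_def\<close>)
    also have "\<dots> = (\<Sum>\<^sub>\<infinity>n. pser (A n) h' * (h$k) ^ n)" by (simp add: inner)
    also have "\<dots> = f (p + h)"
    proof -
      have "(\<lambda>n. \<Sum>\<^sub>\<infinity>\<beta>\<in>{\<beta>. \<beta> k = 0}. G (n, \<beta>)) summable_on UNIV"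
        using summable_on_Sigma_banach[of "\<lambda>n \<beta>. G (n, \<beta>)" UNIV "\<lambda>_. {\<beta>. \<beta> k = 0}"] sumG
        by (simp add: T_def case_prod_unfold)
      then have "(\<lambda>n. pser (A n) h' * (h$k) ^ n) summable_on UNIV" by (simp add: inner)
      then have "((\<lambda>n. pser (A n) h' * (h$k) ^ n) has_sum (\<Sum>\<^sub>\<infinity>n. pser (A n) h' * (h$k) ^ n)) UNIV"
        by (rule has_sum_infsum)
      then have "(\<lambda>n. pser (A n) h' * (h$k) ^ n) sums (\<Sum>\<^sub>\<infinity>n. pser (A n) h' * (h$k) ^ n)"
        by (rule has_sum_imp_sums)
      then show ?thesis using tay sums_unique2 by blast
    qed
    finally show "f (p + h) = pser a h" using eqG by simp
  qed
qed

lemma osgood: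
  fixes f :: "complex^'n::finite \<Rightarrow> complex"
  assumes "finite S" "0 < R"
  shows "osg_hyp f p R M S \<Longrightarrow> osg_concl f p R M S"
  using assms(1)
proof (induction S arbitrary: f M rule: finite_induct)
  case empty
  show ?case unfolding osg_concl_def
  proof (intro exI conjI allI impI)
    define a where "a \<alpha> = (if \<alpha> = (\<lambda>_. 0) then f p else 0)" for \<alpha> :: "'n \<Rightarrow> nat"
    have "norm (f p) \<le> M" using empty.prems center_in_cd[of R p] assms(2) by (auto simp: osg_hyp_def)
    then have "0 \<le> M" by (meson norm_ge_zero order_trans)
    then show "norm (a \<alpha>) * R ^ mdeg \<alpha> \<le> M" for \<alpha>
      using \<open>norm (f p) \<le> M\<close> empty.prems center_in_cd[of R p] assms(2) by (auto simp: a_def mdeg_def osg_hyp_def)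
    fix h :: "complex^'n" assume "\<forall>i. i \<notin> {} \<longrightarrow> h$i = 0"
    then have "h = 0" by (simp add: vec_eq_iff)
    then show "f (p + h) = pser a h" by (simp add: pser_zero a_def)
  qed
next
  case (insert k S)
  show ?case by (rule osg_step[OF insert.IH insert.hyps(2) assms(2) insert.prems])
qed


lemma cd_subset_cball: "cd p R \<subseteq> cball (p::complex^'n::finite) (real CARD('n) * R)"
proof
  fix x assume x: "x \<in> cd p R"
  have "norm (x - p) \<le> (\<Sum>i\<in>UNIV. norm ((x - p)$i))" unfolding norm_vec_def by (rule L2_set_le_sum) auto
  also have "\<dots> \<le> (\<Sum>i\<in>(UNIV::'n set). R)" by (intro sum_mono) (use x in \<open>auto simp: cd_def\<close>)
  finally show "x \<in> cball p (real CARD('n) * R)" by (simp add: dist_norm norm_minus_commute)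
qed

lemma vupd_axis: "vupd x i w = vupd x i 0 + axis i w"
  by (simp add: vec_eq_iff axis_def)

theorem holo_psr:
  fixes f :: "complex^'n::finite \<Rightarrow> complex"
  assumes U: "open U" "holo_on U f" "p \<in> U"
  shows "\<exists>R>0. \<exists>a. psr f p a R"
proof -
  obtain e where e: "e > 0" "cball p e \<subseteq> U" using open_contains_cball U(1,3) by blast
  define R where "R = e / real CARD('n)"
  have R: "0 < R" using e by (simp add: R_def)
  have cdU: "cd p R \<subseteq> U" using cd_subset_cball[of p R] e by (simp add: R_def)
  have der: "\<exists>L. (f has_derivative L) (at y) \<and> (\<forall>c v. L (c *s v) = c * L v)" if "y \<in> U" for y
    using U(2) that by (simp add: holo_on_def)
  have hc: "continuous_on (cd p R) f"
  proof (rule continuous_at_imp_continuous_on, rule ballI)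
    fix y assume "y \<in> cd p R"
    then obtain L where "(f has_derivative L) (at y)" using der cdU by blast
    then show "isCont f y" by (rule has_derivative_continuous)
  qed
  have "bounded (f ` cd p R)" by (intro compact_imp_bounded compact_continuous_image hc compact_cd)
  then obtain M where M: "\<And>y. y \<in> cd p R \<Longrightarrow> norm (f y) \<le> M" by (auto simp: bounded_iff)
  have hol: "(\<lambda>w. f (vupd x i w)) holomorphic_on ball (p$i) R" if x: "x \<in> cd p R" for x i
    unfolding holomorphic_on_def
  proof
    fix w assume w: "w \<in> ball (p$i) R"
    have y: "vupd x i w \<in> U" using x w cdU by (auto intro!: vupd_in_cd simp: dist_norm norm_minus_commute)
    obtain L where fL: "(f has_derivative L) (at (vupd x i w))" and lin: "\<And>c v. L (c *s v) = c * L v"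
      using der[OF y] by blast
    have d1: "((\<lambda>w. vupd x i w) has_derivative axis i) (at w)"
    proof -
      have "((\<lambda>w. vupd x i 0 + axis i w) has_derivative (\<lambda>t. 0 + axis i t)) (at w)"
        by (intro has_derivative_add has_derivative_const bounded_linear_imp_has_derivative bounded_linear_axis)
      then show ?thesis by (simp flip: vupd_axis)
    qed
    have "((\<lambda>w. f (vupd x i w)) has_derivative (\<lambda>t. L (axis i t))) (at w)"
      using has_derivative_compose[OF d1 fL] .
    moreover have "(\<lambda>t. L (axis i t)) = (*) (L (axis i 1))"
    proof
      fix t
      have "L (axis i t) = L (t *s axis i 1)" by (simp only: axis_scale[of i t, symmetric])
      also have "\<dots> = t * L (axis i 1)" by (rule lin)
      finally show "L (axis i t) = L (axis i 1) * t" by (simp add: mult.commute)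
    qed
    ultimately have "((\<lambda>w. f (vupd x i w)) has_field_derivative L (axis i 1)) (at w)"
      by (simp add: has_field_derivative_def)
    then show "(\<lambda>w. f (vupd x i w)) field_differentiable at w within ball (p$i) R"
      using field_differentiable_at_within field_differentiable_def by blast
  qed
  have "osg_hyp f p R M UNIV" unfolding osg_hyp_def using hc M hol by blast
  then have "osg_concl f p R M UNIV" using osgood[of UNIV R f p M] R by simp
  then obtain a where ab: "\<And>\<alpha>. norm (a \<alpha>) * R ^ mdeg \<alpha> \<le> M"
    and ae: "\<And>h. (\<forall>i. norm (h$i) < R) \<Longrightarrow> f (p + h) = pser a h"
    unfolding osg_concl_def by auto
  have "psr f p a R"
    unfolding psr_def
  proof (intro conjI allI impI R)
    fix \<rho> assume \<rho>: "0 < \<rho> \<and> \<rho> < R"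
    show "\<exists>M. \<forall>\<alpha>. norm (a \<alpha>) * \<rho> ^ mdeg \<alpha> \<le> M"
    proof (intro exI allI)
      fix \<alpha>
      have "norm (a \<alpha>) * \<rho> ^ mdeg \<alpha> \<le> norm (a \<alpha>) * R ^ mdeg \<alpha>"
        by (intro mult_left_mono power_mono) (use \<rho> in auto)
      also have "\<dots> \<le> M" by (rule ab)
      finally show "norm (a \<alpha>) * \<rho> ^ mdeg \<alpha> \<le> M" .
    qed
  qed (rule ae)
  then show ?thesis using R by blast
qed


lemma sum_UNIV_plus:
  "(\<Sum>k\<in>(UNIV::('a::finite+'b::finite) set). f k) = (\<Sum>i\<in>UNIV. f (Inl i)) + (\<Sum>j\<in>UNIV. f (Inr j))"
  using sum.Plus[of "UNIV::'a set" "UNIV::'b set" f] by (simp add: UNIV_Plus_UNIV o_def)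

lemma prod_UNIV_plus:
  "(\<Prod>k\<in>(UNIV::('a::finite+'b::finite) set). f k) = (\<Prod>i\<in>UNIV. f (Inl i)) * (\<Prod>j\<in>UNIV. f (Inr j))"
  using prod.Plus[of "UNIV::'a set" "UNIV::'b set" f] by (simp add: UNIV_Plus_UNIV o_def)

lemma sum_UNIV_option:
  "(\<Sum>k\<in>(UNIV::'b::finite option set). f k) = f None + (\<Sum>j\<in>UNIV. f (Some j))"
  by (simp add: UNIV_option_conv sum.reindex)

lemma prod_UNIV_option:
  "(\<Prod>k\<in>(UNIV::'b::finite option set). f k) = f None * (\<Prod>j\<in>UNIV. f (Some j))"
  by (simp add: UNIV_option_conv prod.reindex)

definition bpart :: "('a::finite + 'b::finite \<Rightarrow> nat) \<Rightarrow> 'b \<Rightarrow> nat" where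
  "bpart \<alpha> j = \<alpha> (Inr j)"

definition ext :: "('a::finite + 'b::finite \<Rightarrow> nat) \<Rightarrow> nat \<Rightarrow> ('a + 'b option \<Rightarrow> nat)" where
  "ext \<alpha> \<mu> k = (case k of Inl i \<Rightarrow> \<alpha> (Inl i) | Inr (Some j) \<Rightarrow> \<alpha> (Inr j) | Inr None \<Rightarrow> \<mu>)"

definition ind :: "('b::finite \<Rightarrow> nat) \<Rightarrow> nat \<Rightarrow> ('a::finite + 'b option \<Rightarrow> nat)" where
  "ind \<beta> \<mu> k = (case k of Inl _ \<Rightarrow> 0 | Inr (Some j) \<Rightarrow> \<beta> j | Inr None \<Rightarrow> \<mu>)"

definition lift :: "('a::finite + 'b::finite \<Rightarrow> nat) \<Rightarrow> ('a + 'b option \<Rightarrow> nat)" where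
  "lift \<alpha> k = (case k of Inl i \<Rightarrow> \<alpha> (Inl i) | Inr _ \<Rightarrow> 0)"

definition join :: "('b::finite \<Rightarrow> nat) \<Rightarrow> ('a::finite + 'b option \<Rightarrow> nat) \<Rightarrow> ('a + 'b \<Rightarrow> nat)" where
  "join \<beta> \<alpha> k = (case k of Inl i \<Rightarrow> \<alpha> (Inl i) | Inr j \<Rightarrow> \<beta> j)"

definition A0 :: "('a::finite + 'b::finite option \<Rightarrow> nat) set" where
  "A0 = {\<alpha>. \<forall>k. \<alpha> (Inr k) = 0}"

lemma mdeg_ext: "mdeg (ext \<alpha> \<mu>) = mdeg \<alpha> + \<mu>"
  unfolding mdeg_def by (simp add: sum_UNIV_plus sum_UNIV_option ext_def)

lemma mdeg_bpart_le: "mdeg (bpart \<alpha>) \<le> mdeg \<alpha>"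
  unfolding mdeg_def by (simp add: sum_UNIV_plus bpart_def)

lemma ext_lift_ind: "ext \<alpha> \<mu> = (\<lambda>k. lift \<alpha> k + ind (bpart \<alpha>) \<mu> k)"
  by (auto simp: fun_eq_iff ext_def lift_def ind_def bpart_def split: sum.split option.split)

lemma join_bpart_lift: "join (bpart \<alpha>) (lift \<alpha>) = \<alpha>"
  by (auto simp: fun_eq_iff join_def lift_def bpart_def split: sum.split)

lemma lift_in_A0: "lift \<alpha> \<in> A0"
  by (simp add: A0_def lift_def)

lemma bpart_join: "bpart (join \<beta> \<alpha>) = \<beta>"
  by (simp add: fun_eq_iff join_def bpart_def)

lemma lift_join: "\<alpha> \<in> A0 \<Longrightarrow> lift (join \<beta> \<alpha>) = \<alpha>"
  by (auto simp: fun_eq_iff join_def lift_def A0_def split: sum.split)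

lemma vjoin_add: "vjoin (x + y) (u + v) = vjoin x u + vjoin y v"
  by (simp add: vec_eq_iff vjoin_def split: sum.split)

lemma vjoin_nth_Inl [simp]: "vjoin x y $ Inl i = x $ i" by (simp add: vjoin_def)
lemma vjoin_nth_Inr [simp]: "vjoin x y $ Inr j = y $ j" by (simp add: vjoin_def)
lemma vfst_nth [simp]: "vfst z $ i = z $ Inl i" by (simp add: vfst_def)

lemma vfst_add: "vfst (vjoin q 0 + z) = q + vfst z"
  by (simp add: vec_eq_iff)

lemma vjoin_zero [simp]: "vjoin 0 0 = 0"
  by (simp add: vec_eq_iff vjoin_def split: sum.split)

definition z1of :: "complex^('a::finite + 'b::finite) \<Rightarrow> complex^'b" where
  "z1of z = (\<chi> j. z $ Inr j)"

lemma mnm_join_split: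
  fixes z :: "complex^('a::finite + 'b::finite)"
  shows "mnm \<delta> z = mnm (lift \<delta>) (vjoin (vfst z) (0::complex^'b option)) * mnm (bpart \<delta>) (z1of z)"
  unfolding mnm_def by (simp add: prod_UNIV_plus prod_UNIV_option lift_def bpart_def z1of_def)

lemma mnm_bpart_eq: "mnm \<beta> (z1of z) = (\<Prod>j\<in>UNIV. (z $ Inr j) ^ \<beta> j)"
  by (simp add: mnm_def z1of_def)


lemma Pcoef_ind:
  fixes P :: "complex^('a::finite + 'b::finite option) \<Rightarrow> complex"
  shows "Pcoef P \<beta> \<mu> x0 = tcoef (ind \<beta> \<mu>) P (vjoin x0 0)"
proof -
  have "(\<lambda>k. case k of Inl _ \<Rightarrow> 0 | Inr (Some j) \<Rightarrow> \<beta> j | Inr None \<Rightarrow> \<mu>) = (ind \<beta> \<mu> :: 'a + 'b option \<Rightarrow> nat)"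
    by (simp add: fun_eq_iff ind_def)
  then show ?thesis by (simp add: Pcoef_def)
qed

lemma pcoef_shift:
  fixes P :: "complex^('a::finite + 'b::finite option) \<Rightarrow> complex" and q z0 :: "complex^'a"
  assumes psr: "psr P (vjoin q 0) a R" and z0: "\<And>i. norm (z0$i) < R" and R: "0 < R"
  shows "Pcoef P \<beta> \<mu> (q + z0) = (\<Sum>\<^sub>\<infinity>\<alpha>\<in>A0. a (\<lambda>k. \<alpha> k + ind \<beta> \<mu> k) * mnm \<alpha> (vjoin z0 (0::complex^'b option)))"
proof -
  define c :: "'a + 'b option \<Rightarrow> nat" where "c = ind \<beta> \<mu>"
  define H :: "complex^('a + 'b option)" where "H = vjoin z0 0"
  define CF :: complex where "CF = (\<Prod>i\<in>UNIV. of_nat (fact (c i)))"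
  have CF0: "CF \<noteq> 0" unfolding CF_def by (simp add: prod_zero_iff)
  have HR: "\<And>i. norm (H$i) < R" using z0 R by (auto simp: H_def vjoin_def split: sum.split)
  have "vjoin (q + z0) (0::complex^'b option) = vjoin q 0 + H" unfolding H_def using vjoin_add[of q z0 0 0] by simp
  then have "Pcoef P \<beta> \<mu> (q + z0) = cpartials (mlist c) P (vjoin q 0 + H) / CF"
    by (simp add: Pcoef_ind tcoef_def c_def CF_def)
  also have "cpartials (mlist c) P (vjoin q 0 + H) = pser (dcoefs (mlist c) a) H"
    by (rule psr_cpartials_at[OF psr HR])
  also have "pser (dcoefs (mlist c) a) H / CF = (\<Sum>\<^sub>\<infinity>\<alpha>. dcoefs (mlist c) a \<alpha> * mnm \<alpha> H * inverse CF)"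
    unfolding pser_def by (simp add: infsum_cmult_left' divide_inverse)
  also have "\<dots> = (\<Sum>\<^sub>\<infinity>\<alpha>\<in>A0. a (\<lambda>k. \<alpha> k + c k) * mnm \<alpha> H)"
  proof (rule infsum_cong_neutral)
    fix \<alpha> :: "'a + 'b option \<Rightarrow> nat" assume "\<alpha> \<in> UNIV - A0"
    then obtain k where "\<alpha> (Inr k) \<noteq> 0" by (auto simp: A0_def)
    then have "mnm \<alpha> H = 0" by (intro mnm_zero_coord[of H "Inr k"]) (auto simp: H_def)
    then show "dcoefs (mlist c) a \<alpha> * mnm \<alpha> H * inverse CF = 0" by simp
  next
    fix \<alpha> :: "'a + 'b option \<Rightarrow> nat" assume "\<alpha> \<in> UNIV \<inter> A0"
    then have \<alpha>: "\<And>k. \<alpha> (Inr k) = 0" by (auto simp: A0_def)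
    have "(\<Prod>i\<in>UNIV. of_nat (fact (\<alpha> i + c i)) / of_nat (fact (\<alpha> i)) :: complex) = CF"
      unfolding CF_def
    proof (rule prod.cong)
      fix i :: "'a + 'b option"
      show "of_nat (fact (\<alpha> i + c i)) / of_nat (fact (\<alpha> i)) = (of_nat (fact (c i)) :: complex)"
        using \<alpha> by (cases i) (auto simp: c_def ind_def)
    qed simp
    then have "dcoefs (mlist c) a \<alpha> = CF * a (\<lambda>k. \<alpha> k + c k)"
      by (simp add: dcoefs_formula mlist_count)
    then show "dcoefs (mlist c) a \<alpha> * mnm \<alpha> H * inverse CF = a (\<lambda>k. \<alpha> k + c k) * mnm \<alpha> H"
      using CF0 by (simp add: field_simps)
  qed auto
  finally show ?thesis by (simp add: c_def H_def)
qed


definition muo :: "nat \<Rightarrow> int \<Rightarrow> ('b::finite \<Rightarrow> nat) \<Rightarrow> int" where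
  "muo m \<nu> \<beta> = \<nu> + int m * int (\<Sum>j\<in>UNIV. \<beta> j)"

definition ecoef :: "(complex^('a::finite + 'b::finite option) \<Rightarrow> complex) \<Rightarrow> nat \<Rightarrow> int \<Rightarrow> complex^'a \<Rightarrow> ('a + 'b \<Rightarrow> nat) \<Rightarrow> complex" where
  "ecoef P m \<nu> q \<alpha> = (if muo m \<nu> (bpart \<alpha>) \<ge> 0 then tcoef (ext \<alpha> (nat (muo m \<nu> (bpart \<alpha>)))) P (vjoin q 0) else 0)"

lemma laurent_idx_muo: "laurent_idx m \<nu> = {\<beta>. muo m \<nu> \<beta> \<ge> 0}"
  by (simp add: laurent_idx_def muo_def)

lemma laurent_term_eq:
  fixes P :: "complex^('a::finite + 'b::finite option) \<Rightarrow> complex" and z :: "complex^('a + 'b)"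
  shows "laurent_term P m \<nu> (vjoin q 0 + z) \<beta> = Pcoef P \<beta> (nat (muo m \<nu> \<beta>)) (q + vfst z) * mnm \<beta> (z1of z)"
  by (simp add: laurent_term_def muo_def vfst_add mnm_bpart_eq)

lemma local_laurent:
  fixes P :: "complex^('a::finite + 'b::finite option) \<Rightarrow> complex" and q :: "complex^'a"
  assumes psr: "psr P (vjoin q 0) a R"
  shows "\<exists>r'>0. psr (laurent_coef P m \<nu>) (vjoin q 0) (ecoef P m \<nu> q) r' \<and>
     (\<forall>z. (\<forall>i. norm (z$i) < r') \<longrightarrow> laurent_term P m \<nu> (vjoin q 0 + z) summable_on laurent_idx m \<nu>)"
proof -
  have R: "0 < R" using psr by (simp add: psr_def)
  define \<rho> where "\<rho> = min (R / 2) (1 / 2)"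
  have \<rho>: "0 < \<rho>" "\<rho> < R" "\<rho> \<le> 1" using R by (auto simp: \<rho>_def)
  obtain M where M: "\<And>\<gamma>. norm (a \<gamma>) * \<rho> ^ mdeg \<gamma> \<le> M" using psr \<rho> unfolding psr_def by blast
  have M0: "0 \<le> M"
    by (rule order_trans[OF mult_nonneg_nonneg[OF norm_ge_zero zero_le_power[OF less_imp_le[OF \<rho>(1)]]] M])
  have atc: "tcoef \<gamma> P (vjoin q 0) = a \<gamma>" for \<gamma> by (rule psr_tcoef[OF psr])
  define r' where "r' = \<rho> ^ Suc m"
  have r': "0 < r'" "r' \<le> \<rho>" "r' < R" using \<rho> by (auto simp: r'_def power_le_one intro: order.strict_trans1[OF _ \<rho>(2)])
  define e where "e = ecoef P m \<nu> q"
  have e_eq: "e \<alpha> = (if muo m \<nu> (bpart \<alpha>) \<ge> 0 then a (ext \<alpha> (nat (muo m \<nu> (bpart \<alpha>)))) else 0)" for \<alpha>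
    by (simp add: e_def ecoef_def atc)
  define Mb where "Mb = M / \<rho> ^ nat \<nu>"
  have ebound: "norm (e \<alpha>) * r' ^ mdeg \<alpha> \<le> Mb" for \<alpha>
  proof (cases "muo m \<nu> (bpart \<alpha>) \<ge> 0")
    case False then show ?thesis using M0 \<rho> by (simp add: e_eq Mb_def)
  next
    case True
    define \<mu> where "\<mu> = nat (muo m \<nu> (bpart \<alpha>))"
    define d where "d = mdeg \<alpha>"
    have bd: "mdeg (bpart \<alpha>) \<le> d" unfolding d_def by (rule mdeg_bpart_le)
    have "int \<mu> = \<nu> + int m * int (mdeg (bpart \<alpha>))" using True by (simp add: \<mu>_def muo_def mdeg_def)
    also have "\<dots> \<le> int (nat \<nu>) + int m * int d" using bd by (intro add_mono mult_left_mono) auto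
    also have "\<dots> = int (nat \<nu> + m * d)" by simp
    finally have "\<mu> \<le> nat \<nu> + m * d" by (simp only: of_nat_le_iff)
    then have le: "d + \<mu> \<le> Suc m * d + nat \<nu>" by simp
    have "norm (e \<alpha>) * r' ^ mdeg \<alpha> * \<rho> ^ nat \<nu> = norm (a (ext \<alpha> \<mu>)) * \<rho> ^ (Suc m * d + nat \<nu>)"
      using True by (simp add: e_eq \<mu>_def d_def r'_def power_add power_mult power_mult_distrib mult.assoc)
    also have "\<dots> \<le> norm (a (ext \<alpha> \<mu>)) * \<rho> ^ (d + \<mu>)"
      by (intro mult_left_mono power_decreasing le) (use \<rho> in auto)
    also have "\<dots> \<le> M" using M[of "ext \<alpha> \<mu>"] by (simp add: mdeg_ext d_def)
    finally show ?thesis using \<rho> by (simp add: Mb_def field_simps)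
  qed
  have expand: "laurent_term P m \<nu> (vjoin q 0 + z) summable_on laurent_idx m \<nu> \<and>
      laurent_coef P m \<nu> (vjoin q 0 + z) = pser e z" if z: "\<And>i. norm (z$i) < r'" for z
  proof -
    obtain \<rho>'' where \<rho>'': "0 \<le> \<rho>''" "\<rho>'' < r'" "\<And>i. norm (z$i) \<le> \<rho>''" using max_coord[of z r'] z by blast
    have sumz: "(\<lambda>\<delta>. e \<delta> * mnm \<delta> z) summable_on UNIV" by (rule pser_summable[OF ebound r'(1) \<rho>''(3) \<rho>''(2)])
    define z0 where "z0 = vfst z"
    define H :: "complex^('a + 'b option)" where "H = vjoin z0 0"
    have z0R: "norm (z0$i) < R" for i using z[of "Inl i"] r' by (simp add: z0_def)
    define idx where "idx = (laurent_idx m \<nu> :: ('b \<Rightarrow> nat) set)"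
    define D where "D = {\<delta>::'a + 'b \<Rightarrow> nat. bpart \<delta> \<in> idx}"
    define T where "T = Sigma idx (\<lambda>_. (A0 :: ('a + 'b option \<Rightarrow> nat) set))"
    define G where "G y = a (\<lambda>k. snd y k + ind (fst y) (nat (muo m \<nu> (fst y))) k) * mnm (snd y) H * mnm (fst y) (z1of z)"
      for y :: "('b \<Rightarrow> nat) \<times> ('a + 'b option \<Rightarrow> nat)"
    have eD: "e \<delta> = 0" if "\<delta> \<notin> D" for \<delta> using that by (simp add: D_def idx_def laurent_idx_muo e_eq)
    have sumD: "(\<lambda>\<delta>. e \<delta> * mnm \<delta> z) summable_on D" by (rule summable_on_subset_banach[OF sumz]) auto
    have b1: "join (bpart \<delta>) (lift \<delta>) = \<delta>" for \<delta> by (rule join_bpart_lift)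
    have b2: "(bpart \<delta>, lift \<delta>) \<in> T" if "\<delta> \<in> D" for \<delta> using that by (simp add: T_def D_def lift_in_A0)
    have b3: "(bpart (join (fst y) (snd y)), lift (join (fst y) (snd y))) = y" if "y \<in> T" for y
      using that by (auto simp: T_def bpart_join lift_join)
    have b4: "join (fst y) (snd y) \<in> D" if "y \<in> T" for y using that by (auto simp: T_def D_def bpart_join)
    have b5: "G (bpart \<delta>, lift \<delta>) = e \<delta> * mnm \<delta> z" if "\<delta> \<in> D" for \<delta>
    proof -
      have "muo m \<nu> (bpart \<delta>) \<ge> 0" using that by (simp add: D_def idx_def laurent_idx_muo)
      then show ?thesis
        by (simp add: G_def e_eq ext_lift_ind mnm_join_split[of \<delta> z] H_def z0_def)
    qed
    have sumT: "G summable_on T"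
    proof -
      have "(\<lambda>\<delta>. e \<delta> * mnm \<delta> z) summable_on D \<longleftrightarrow> G summable_on T"
        by (rule summable_on_reindex_bij_witness[where i="\<lambda>y. join (fst y) (snd y)" and j="\<lambda>\<delta>. (bpart \<delta>, lift \<delta>)"])
          (use b1 b2 b3 b4 b5 in auto)
      then show ?thesis using sumD by simp
    qed
    have eqT: "infsum (\<lambda>\<delta>. e \<delta> * mnm \<delta> z) D = infsum G T"
      by (rule infsum_reindex_bij_witness[where i="\<lambda>y. join (fst y) (snd y)" and j="\<lambda>\<delta>. (bpart \<delta>, lift \<delta>)"])
        (use b1 b2 b3 b4 b5 in auto)
    have inner: "(\<Sum>\<^sub>\<infinity>\<alpha>\<in>A0. G (\<beta>, \<alpha>)) = laurent_term P m \<nu> (vjoin q 0 + z) \<beta>" for \<beta>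
    proof -
      have "(\<Sum>\<^sub>\<infinity>\<alpha>\<in>A0. G (\<beta>, \<alpha>)) = (\<Sum>\<^sub>\<infinity>\<alpha>\<in>A0. a (\<lambda>k. \<alpha> k + ind \<beta> (nat (muo m \<nu> \<beta>)) k) * mnm \<alpha> H) * mnm \<beta> (z1of z)"
        unfolding G_def by (simp add: infsum_cmult_left')
      also have "(\<Sum>\<^sub>\<infinity>\<alpha>\<in>A0. a (\<lambda>k. \<alpha> k + ind \<beta> (nat (muo m \<nu> \<beta>)) k) * mnm \<alpha> H) = Pcoef P \<beta> (nat (muo m \<nu> \<beta>)) (q + z0)"
        unfolding H_def by (rule pcoef_shift[OF psr z0R R, symmetric])
      finally show ?thesis by (simp add: laurent_term_eq z0_def)
    qed
    have sumO: "(\<lambda>\<beta>. \<Sum>\<^sub>\<infinity>\<alpha>\<in>A0. G (\<beta>, \<alpha>)) summable_on idx"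
      using summable_on_Sigma_banach[of "\<lambda>\<beta> \<alpha>. G (\<beta>, \<alpha>)" idx "\<lambda>_. A0"] sumT by (simp add: T_def case_prod_unfold)
    have "laurent_term P m \<nu> (vjoin q 0 + z) summable_on idx" using sumO by (simp add: inner)
    moreover have "laurent_coef P m \<nu> (vjoin q 0 + z) = pser e z"
    proof -
      have "laurent_coef P m \<nu> (vjoin q 0 + z) = (\<Sum>\<^sub>\<infinity>\<beta>\<in>idx. \<Sum>\<^sub>\<infinity>\<alpha>\<in>A0. G (\<beta>, \<alpha>))"
        by (simp add: laurent_coef_def inner idx_def)
      also have "\<dots> = infsum G T" unfolding T_def by (rule infsum_Sigma_banach) (use sumT in \<open>simp add: T_def\<close>)
      also have "\<dots> = infsum (\<lambda>\<delta>. e \<delta> * mnm \<delta> z) D" by (rule eqT[symmetric])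
      also have "\<dots> = pser e z" unfolding pser_def by (rule infsum_cong_neutral) (use eD in auto)
      finally show ?thesis .
    qed
    ultimately show ?thesis by (simp add: idx_def)
  qed
  have "psr (laurent_coef P m \<nu>) (vjoin q 0) e r'"
    unfolding psr_def
  proof (intro conjI allI impI r'(1))
    fix s assume s: "0 < s \<and> s < r'"
    show "\<exists>M. \<forall>\<alpha>. norm (e \<alpha>) * s ^ mdeg \<alpha> \<le> M"
    proof (intro exI allI)
      fix \<alpha>
      have "norm (e \<alpha>) * s ^ mdeg \<alpha> \<le> norm (e \<alpha>) * r' ^ mdeg \<alpha>"
        by (intro mult_left_mono power_mono) (use s in auto)
      also have "\<dots> \<le> Mb" by (rule ebound)
      finally show "norm (e \<alpha>) * s ^ mdeg \<alpha> \<le> Mb" .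
    qed
  next
    fix h :: "complex^('a + 'b)" assume "\<forall>i. norm (h$i) < r'"
    then show "laurent_coef P m \<nu> (vjoin q 0 + h) = pser e h" using expand by blast
  qed
  then show ?thesis using expand r'(1) unfolding e_def by blast
qed


lemma poly_fun_cmult: "poly_fun f \<Longrightarrow> poly_fun (\<lambda>x. c * f x)"
  unfolding poly_fun_def
proof (elim exE conjE)
  fix A cf assume A: "finite A" and f: "\<forall>x. f x = (\<Sum>\<alpha>\<in>A. cf \<alpha> * (\<Prod>i\<in>UNIV. (x $ i) ^ \<alpha> i))"
  show "\<exists>A c'. finite A \<and> (\<forall>x. c * f x = (\<Sum>\<alpha>\<in>A. c' \<alpha> * (\<Prod>i\<in>UNIV. (x $ i) ^ \<alpha> i)))"
    by (rule exI[of _ A], rule exI[of _ "\<lambda>\<alpha>. c * cf \<alpha>"]) (simp add: A f sum_distrib_left mult.assoc)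
qed

lemma poly_fun_zero: "poly_fun (\<lambda>x. 0)"
  unfolding poly_fun_def by (rule exI[of _ "{}"]) simp

lemma mlist_zero: "mlist (\<lambda>_::'n::finite. 0) = []"
proof -
  have c: "\<And>i. count_list (mlist (\<lambda>_::'n. 0)) i = 0" by (simp add: mlist_count)
  show ?thesis
  proof (cases "mlist (\<lambda>_::'n. 0)")
    case (Cons x xs) then show ?thesis using c[of x] by simp
  qed simp
qed

lemma tcoef_zero_idx: "tcoef (\<lambda>_::'n::finite. 0) f y = f y"
  by (simp add: tcoef_def mlist_zero)

lemma vfst_vjoin [simp]: "vfst (vjoin x y) = x"
  by (simp add: vec_eq_iff)

theorem lemma10p6:
  fixes P :: "complex^('a::finite + 'b::finite option) \<Rightarrow> complex"
    and m :: nat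
  assumes hP: "Rring P"
    and hP0: "\<forall>x0. P (vtriple x0 0 0) = 0"
  shows "(\<forall>x0. laurent_coef P m 0 (vjoin x0 0) = 0)
    \<and> (\<forall>\<nu>. (\<exists>U. open U \<and> range (\<lambda>x0. vjoin x0 0) \<subseteq> U \<and>
               (\<forall>z\<in>U. laurent_term P m \<nu> z summable_on laurent_idx m \<nu>))
           \<and> Rring (laurent_coef P m \<nu>))
    \<and> (\<forall>K::int. K > 0 \<longrightarrow> vanishes_to P (real_of_int K) \<longrightarrow>
         (\<forall>\<nu>. \<nu> \<le> K \<longrightarrow> vanishes_to (laurent_coef P m \<nu>) (real_of_int (K - \<nu>) / real (m + 1))))"
proof -
  obtain U where U: "open U" "range (\<lambda>x0. vjoin x0 0) \<subseteq> U" "holo_on U P"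
    and Upoly: "\<And>is. poly_fun (\<lambda>x0. cpartials is P (vjoin x0 0))"
    using hP unfolding Rring_def by blast
  have psrq: "\<exists>R a. psr P (vjoin q 0) a R" for q
    using holo_psr[OF U(1) U(3), of "vjoin q 0"] U(2) by blast
  have loc: "\<exists>r'>0. psr (laurent_coef P m \<nu>) (vjoin q 0) (ecoef P m \<nu> q) r' \<and>
     (\<forall>z. (\<forall>i. norm (z$i) < r') \<longrightarrow> laurent_term P m \<nu> (vjoin q 0 + z) summable_on laurent_idx m \<nu>)" for q \<nu>
    using psrq[of q] local_laurent[of P q] by blast
  have part1: "laurent_coef P m 0 (vjoin x0 0) = 0" for x0
  proof -
    define lt where "lt = laurent_term P m 0 (vjoin x0 (0::complex^'b))"
    have lt0: "lt \<beta> = 0" if "\<beta> \<noteq> (\<lambda>_. 0)" for \<beta>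
    proof -
      obtain j where "\<beta> j \<noteq> 0" using \<open>\<beta> \<noteq> (\<lambda>_. 0)\<close> by auto
      then have "(\<Prod>j\<in>UNIV. ((vjoin x0 (0::complex^'b)) $ Inr j) ^ (\<beta> j)) = 0"
        by (intro prod_zero) (auto intro: bexI[of _ j])
      then show ?thesis by (simp add: lt_def laurent_term_def)
    qed
    have "laurent_coef P m 0 (vjoin x0 0) = infsum lt {\<lambda>_. 0}"
      unfolding laurent_coef_def lt_def[symmetric]
      by (rule infsum_cong_neutral) (auto simp: laurent_idx_def lt0)
    also have "\<dots> = lt (\<lambda>_. 0)" by simp
    also have "\<dots> = Pcoef P (\<lambda>_. 0) 0 x0" by (simp add: lt_def laurent_term_def)
    also have "\<dots> = P (vjoin x0 0)"
    proof -
      have "(ind (\<lambda>_. 0) 0 :: 'a + 'b option \<Rightarrow> nat) = (\<lambda>_. 0)"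
        by (auto simp: fun_eq_iff ind_def split: sum.split option.split)
      then show ?thesis by (simp add: Pcoef_ind tcoef_zero_idx)
    qed
    also have "vjoin x0 (0::complex^'b option) = vtriple x0 0 0"
    proof -
      have "(\<chi> k. case k of Some j \<Rightarrow> (0::complex^'b) $ j | None \<Rightarrow> 0) = (0::complex^'b option)"
        by (simp add: vec_eq_iff split: option.split)
      then show ?thesis by (simp add: vtriple_def)
    qed
    finally show ?thesis using hP0 by simp
  qed
  have part2: "(\<exists>U. open U \<and> range (\<lambda>x0. vjoin x0 0) \<subseteq> U \<and>
               (\<forall>z\<in>U. laurent_term P m \<nu> z summable_on laurent_idx m \<nu>))
           \<and> Rring (laurent_coef P m \<nu>)" for \<nu>
  proof -
    obtain rr where rr: "\<And>q. rr q > 0" "\<And>q. psr (laurent_coef P m \<nu>) (vjoin q 0) (ecoef P m \<nu> q) (rr q)"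
      "\<And>q z. (\<forall>i. norm (z$i) < rr q) \<Longrightarrow> laurent_term P m \<nu> (vjoin q 0 + z) summable_on laurent_idx m \<nu>"
      using loc[where \<nu>=\<nu>] by metis
    define V where "V = (\<Union>q. pdisc (vjoin q (0::complex^'b)) (rr q))"
    have oV: "open V" unfolding V_def by (intro open_UN ballI open_pdisc)
    have rV: "range (\<lambda>x0. vjoin x0 0) \<subseteq> V" using rr(1) by (auto simp: V_def pdisc_def)
    have sV: "laurent_term P m \<nu> z summable_on laurent_idx m \<nu>" if "z \<in> V" for z
    proof -
      obtain q where q: "z \<in> pdisc (vjoin q 0) (rr q)" using \<open>z \<in> V\<close> by (auto simp: V_def)
      then have "laurent_term P m \<nu> (vjoin q 0 + (z - vjoin q 0)) summable_on laurent_idx m \<nu>"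
        by (intro rr(3)) (auto simp: pdisc_def)
      then show ?thesis by simp
    qed
    have hV: "holo_on V (laurent_coef P m \<nu>)"
      unfolding holo_on_def
    proof
      fix z assume "z \<in> V"
      then obtain q where q: "z \<in> pdisc (vjoin q 0) (rr q)" by (auto simp: V_def)
      from psr_holo[OF rr(2)[of q]] q
      show "\<exists>L. (laurent_coef P m \<nu> has_derivative L) (at z) \<and> (\<forall>c v. L (c *s v) = c * L v)"
        unfolding holo_on_def by blast
    qed
    have pV: "poly_fun (\<lambda>x0. cpartials is (laurent_coef P m \<nu>) (vjoin x0 0))" for "is"
    proof -
      define cnt where "cnt = count_list is"
      define K where "K = (\<Prod>i\<in>UNIV. of_nat (fact (cnt i)) :: complex)"
      define d where "d = ext cnt (nat (muo m \<nu> (bpart cnt)))"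
      define CF where "CF = (\<Prod>i\<in>UNIV. of_nat (fact (d i)) :: complex)"
      have eq: "cpartials is (laurent_coef P m \<nu>) (vjoin x0 0) =
          (if muo m \<nu> (bpart cnt) \<ge> 0 then K / CF * cpartials (mlist d) P (vjoin x0 0) else 0)" for x0
      proof -
        have "cpartials is (laurent_coef P m \<nu>) (vjoin x0 0) = dcoefs is (ecoef P m \<nu> x0) (\<lambda>_. 0)"
          by (rule psr_center[OF psr_cpartials[OF rr(2)[of x0]]])
        also have "\<dots> = K * ecoef P m \<nu> x0 cnt"
          by (simp add: dcoefs_formula K_def cnt_def)
        also have "\<dots> = (if muo m \<nu> (bpart cnt) \<ge> 0 then K / CF * cpartials (mlist d) P (vjoin x0 0) else 0)"
          by (simp add: ecoef_def tcoef_def d_def CF_def)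
        finally show ?thesis .
      qed
      show ?thesis
      proof (cases "muo m \<nu> (bpart cnt) \<ge> 0")
        case True
        have "poly_fun (\<lambda>x0. K / CF * cpartials (mlist d) P (vjoin x0 0))" by (rule poly_fun_cmult[OF Upoly])
        then show ?thesis unfolding eq by (simp only: if_P[OF True])
      next
        case False
        show ?thesis unfolding eq by (simp only: if_not_P[OF False] poly_fun_zero)
      qed
    qed
    show ?thesis using oV rV sV hV pV unfolding Rring_def by blast
  qed
  have part3: "vanishes_to (laurent_coef P m \<nu>) (real_of_int (K - \<nu>) / real (m + 1))"
    if K: "K > 0" "vanishes_to P (real_of_int K)" and \<nu>: "\<nu> \<le> K" for K \<nu>
    unfolding vanishes_to_def
  proof (intro allI impI)
    fix \<alpha> :: "'a + 'b \<Rightarrow> nat"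
    assume \<alpha>: "real (\<Sum>i\<in>UNIV. \<alpha> i) < real_of_int (K - \<nu>) / real (m + 1)"
    obtain r' where "psr (laurent_coef P m \<nu>) (vjoin 0 0) (ecoef P m \<nu> 0) r'" using loc[where q=0 and \<nu>=\<nu>] by blast
    then have "tcoef \<alpha> (laurent_coef P m \<nu>) (vjoin 0 0) = ecoef P m \<nu> 0 \<alpha>" by (rule psr_tcoef)
    then have tc: "tcoef \<alpha> (laurent_coef P m \<nu>) 0 = ecoef P m \<nu> 0 \<alpha>" by simp
    show "tcoef \<alpha> (laurent_coef P m \<nu>) 0 = 0"
    proof (cases "muo m \<nu> (bpart \<alpha>) \<ge> 0")
      case False then show ?thesis using tc by (simp add: ecoef_def)
    next
      case True
      define \<mu> where "\<mu> = nat (muo m \<nu> (bpart \<alpha>))"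
      define dd where "dd = mdeg \<alpha>"
      have bd: "mdeg (bpart \<alpha>) \<le> dd" unfolding dd_def by (rule mdeg_bpart_le)
      have "real dd * real (m + 1) < real_of_int (K - \<nu>)"
        using \<alpha> by (simp add: dd_def mdeg_def field_simps)
      then have lt1: "int dd * int (m + 1) < K - \<nu>"
        by (metis of_int_less_iff of_int_of_nat_eq of_int_mult)
      have "int \<mu> = \<nu> + int m * int (mdeg (bpart \<alpha>))" using True by (simp add: \<mu>_def muo_def mdeg_def)
      also have "\<dots> \<le> \<nu> + int m * int dd" using bd by (intro add_left_mono mult_left_mono) auto
      finally have "int (dd + \<mu>) < K" using lt1 by (simp add: algebra_simps)
      then have lt: "real (\<Sum>i\<in>UNIV. ext \<alpha> \<mu> i) < real_of_int K"
        using mdeg_ext[of \<alpha> \<mu>] unfolding mdeg_def dd_def by linarith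
      have "tcoef (ext \<alpha> \<mu>) P 0 = 0" using K(2) lt unfolding vanishes_to_def by blast
      then show ?thesis using tc True by (simp add: ecoef_def \<mu>_def)
    qed
  qed
  show ?thesis using part1 part2 part3 by blast
qed

end
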